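(* Under the hypotheses and notation of the setting below (restriction $r=\sigma^{\mathrm{ASY}}\mathbf 1$, Assumptions A, B, C), let $(y_1^\infty,\dots,y_N^\infty)$ be the limit of the allocation vectors and $(\rho_i^\infty,\xi_i^\infty,x_i^\infty)$ a lex-optimal solution of (P3) with $y_i^\infty$ in place of $y_i^t$. Then $$\sum_{i=1}^N c_i^\top x_i^\infty - J^{\mathrm{MILP}}\le \sum_{s=1}^{S+1}\big(c_{i_s}^\top x_{i_s}^\infty - p_{i_s}(y_{i_s}^\infty)\big)+\frac{\sigma^{\mathrm{ASY}}}{\zeta_{\hat z}}\sum_{i=1}^N\big(c_i^\top\hat z_i - p_i(y_i^\infty)\big),$$ where $J^{\mathrm{MILP}}$ is the optimal cost of the MILP, $(\hat z_1,\dots,\hat z_N)$ is a Slater point as in Assumption C, and $i_1,i_2,\dots$ enumerate the (at most $S+1$) agents $i$ for which $z_i^\infty\notin X_i$, with $z_i^\infty$ the local optimal solution of the subproblem defining $p_i(y_i^\infty)$ (the first sum runs over these agents only).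
   Context: Data: for each $i\in\{1,\dots,N\}$, $c_i\in\mathbb{R}^{n_i}$, $A_i\in\mathbb{R}^{S\times n_i}$ (rows $A_i^s$), nonempty compact $X_i=\{x_i\in\mathbb{Z}^{Z_i}\times\mathbb{R}^{R_i}:D_ix_i\preceq d_i\}$; $b\in\mathbb{R}^S$ with components $b_s$. $\preceq$ is componentwise, $\mathbf 1$ the all-ones vector. MILP: minimize $\sum_ic_i^\top x_i$ s.t. $\sum_iA_ix_i\preceq b$, $x_i\in X_i$ (assumed feasible). Restricted LP (LP$_r$): minimize $\sum_ic_i^\top z_i$ s.t. $\sum_iA_iz_i\preceq b-r$, $z_i\in\mathrm{conv}(X_i)$. $p_i(y_i)$: optimal value of minimize $c_i^\top z_i$ s.t. $A_iz_i\preceq y_i$, $z_i\in\mathrm{conv}(X_i)$. Restriction: $L_i^s=\min_{x_i\in X_i}A_i^sx_i$; $(x_i^L,\tilde\ell_i)$ optimal for minimize $\ell_i$ over $x_i\in X_i,\ell_i\in\mathbb{R}$ s.t. $A_ix_i-L_i\preceq\ell_i\mathbf 1$; $\sigma^{\mathrm{ASY}}=(S+1)\max_i\max_s(A_i^sx_i^L-L_i^s)$; here $r=\sigma^{\mathrm{ASY}}\mathbf 1$. Assumption A: (LP$_r$) is feasible with unique optimal solution. Assumption B: step-sizes $\alpha^t\ge0$, $\sum_t\alpha^t=\infty$, $\sum_t(\alpha^t)^2<\infty$. Assumption C (Slater): there exist $\hat z_i\in\mathrm{conv}(X_i)$ with $\zeta_{\hat z}:=\min_s\big(b_s-r_s-\sum_iA_i^s\hat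 z_i\big)>0$. Algorithm over a connected undirected graph with neighbor sets $\mathcal N_i$, parameter $M>0$ sufficiently large, initialization $\sum_iy_i^0=b-r$. At each $t$, agent $i$: (P1) computes a primal-dual optimal pair $((z_i^t,v_i^t),\mu_i^t)$ of: minimize $c_i^\top z_i+Mv_i$ over $z_i\in\mathrm{conv}(X_i)$, $v_i\ge0$, s.t. $A_iz_i\preceq y_i^t+v_i\mathbf 1$ ($\mu_i^t$ the multiplier of this constraint); (P2) $y_i^{t+1}=y_i^t+\alpha^t\sum_{j\in\mathcal N_i}(\mu_i^t-\mu_j^t)$; (P3) lexicographic problem: minimize lexicographically $(\rho_i,\xi_i)$ over $x_i\in X_i,\rho_i\ge0,\xi_i$ s.t. $c_i^\top x_i\le\xi_i$, $A_ix_i\preceq y_i^t+\rho_i\mathbf 1$ (first minimize $\rho_i$, then $c_i^\top x_i$ with $\rho_i$ fixed at its minimum). The allocation sequence converges to $(y_1^\infty,\dots,y_N^\infty)$. *)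

theory Defs
  imports "HOL-Analysis.Analysis"
begin

text \<open>Agents are indexed by i < N, coupling constraints by s < S.
A vector of R^k is represented as a function nat => real that vanishes on indices >= k.
A_i is represented as As :: nat => nat => real with As s = row s of A_i.\<close>

definition dotp :: "nat \<Rightarrow> (nat \<Rightarrow> real) \<Rightarrow> (nat \<Rightarrow> real) \<Rightarrow> real" where
  "dotp k u w = (\<Sum>j<k. u j * w j)"

definition Xset :: "nat \<Rightarrow> nat \<Rightarrow> nat \<Rightarrow> (nat \<Rightarrow> nat \<Rightarrow> real) \<Rightarrow> (nat \<Rightarrow> real) \<Rightarrow> (nat \<Rightarrow> real) set" where
  "Xset k Zk mr Dm dv = {x. (\<forall>j<Zk. x j \<in> \<int>) \<and> (\<forall>j\<ge>k. x j = 0) \<and> (\<forall>q<mr. dotp k (Dm q) x \<le> dv q)}"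

text \<open>Convex hull (set of all finite convex combinations), written out since
nat => real is not instantiated as a real vector space in the library.\<close>
definition convh :: "(nat \<Rightarrow> real) set \<Rightarrow> (nat \<Rightarrow> real) set" where
  "convh X = {z. \<exists>F w. finite F \<and> F \<subseteq> X \<and> (\<forall>x\<in>F. 0 \<le> w x) \<and> sum w F = 1 \<and>
                      z = (\<lambda>j. \<Sum>x\<in>F. w x * x j)}"

definition sub_feas :: "nat \<Rightarrow> (nat \<Rightarrow> nat \<Rightarrow> real) \<Rightarrow> nat \<Rightarrow> (nat \<Rightarrow> real) set
     \<Rightarrow> (nat \<Rightarrow> real) \<Rightarrow> (nat \<Rightarrow> real) \<Rightarrow> bool" where
  "sub_feas k As S X yv z \<longleftrightarrow> z \<in> convh X \<and> (\<forall>s<S. dotp k (As s) z \<le> yv s)"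

definition pval :: "nat \<Rightarrow> (nat \<Rightarrow> real) \<Rightarrow> (nat \<Rightarrow> nat \<Rightarrow> real) \<Rightarrow> nat \<Rightarrow> (nat \<Rightarrow> real) set
     \<Rightarrow> (nat \<Rightarrow> real) \<Rightarrow> real" where
  "pval k cv As S X yv = Inf {dotp k cv z | z. sub_feas k As S X yv z}"

definition sub_opt :: "nat \<Rightarrow> (nat \<Rightarrow> real) \<Rightarrow> (nat \<Rightarrow> nat \<Rightarrow> real) \<Rightarrow> nat \<Rightarrow> (nat \<Rightarrow> real) set
     \<Rightarrow> (nat \<Rightarrow> real) \<Rightarrow> (nat \<Rightarrow> real) \<Rightarrow> bool" where
  "sub_opt k cv As S X yv z \<longleftrightarrow> sub_feas k As S X yv z \<and>
      (\<forall>z'. sub_feas k As S X yv z' \<longrightarrow> dotp k cv z \<le> dotp k cv z')"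

definition milp_feas :: "nat \<Rightarrow> nat \<Rightarrow> (nat \<Rightarrow> nat) \<Rightarrow> (nat \<Rightarrow> nat \<Rightarrow> nat \<Rightarrow> real) \<Rightarrow> (nat \<Rightarrow> real)
     \<Rightarrow> (nat \<Rightarrow> (nat \<Rightarrow> real) set) \<Rightarrow> (nat \<Rightarrow> nat \<Rightarrow> real) \<Rightarrow> bool" where
  "milp_feas N S n A b X x \<longleftrightarrow> (\<forall>i<N. x i \<in> X i) \<and>
      (\<forall>s<S. (\<Sum>i<N. dotp (n i) (A i s) (x i)) \<le> b s)"

definition J_milp :: "nat \<Rightarrow> nat \<Rightarrow> (nat \<Rightarrow> nat) \<Rightarrow> (nat \<Rightarrow> nat \<Rightarrow> real) \<Rightarrow> (nat \<Rightarrow> nat \<Rightarrow> nat \<Rightarrow> real)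
     \<Rightarrow> (nat \<Rightarrow> real) \<Rightarrow> (nat \<Rightarrow> (nat \<Rightarrow> real) set) \<Rightarrow> real" where
  "J_milp N S n c A b X = Inf {(\<Sum>i<N. dotp (n i) (c i) (x i)) | x. milp_feas N S n A b X x}"

definition lpr_feas :: "nat \<Rightarrow> nat \<Rightarrow> (nat \<Rightarrow> nat) \<Rightarrow> (nat \<Rightarrow> nat \<Rightarrow> nat \<Rightarrow> real) \<Rightarrow> (nat \<Rightarrow> real)
     \<Rightarrow> (nat \<Rightarrow> real) \<Rightarrow> (nat \<Rightarrow> (nat \<Rightarrow> real) set) \<Rightarrow> (nat \<Rightarrow> nat \<Rightarrow> real) \<Rightarrow> bool" where
  "lpr_feas N S n A b rv X z \<longleftrightarrow> (\<forall>i<N. z i \<in> convh (X i)) \<and>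
      (\<forall>s<S. (\<Sum>i<N. dotp (n i) (A i s) (z i)) \<le> b s - rv s)"

definition lpr_opt :: "nat \<Rightarrow> nat \<Rightarrow> (nat \<Rightarrow> nat) \<Rightarrow> (nat \<Rightarrow> nat \<Rightarrow> real) \<Rightarrow> (nat \<Rightarrow> nat \<Rightarrow> nat \<Rightarrow> real)
     \<Rightarrow> (nat \<Rightarrow> real) \<Rightarrow> (nat \<Rightarrow> real) \<Rightarrow> (nat \<Rightarrow> (nat \<Rightarrow> real) set) \<Rightarrow> (nat \<Rightarrow> nat \<Rightarrow> real) \<Rightarrow> bool" where
  "lpr_opt N S n c A b rv X z \<longleftrightarrow> lpr_feas N S n A b rv X z \<and>
      (\<forall>z'. lpr_feas N S n A b rv X z' \<longrightarrow>
          (\<Sum>i<N. dotp (n i) (c i) (z i)) \<le> (\<Sum>i<N. dotp (n i) (c i) (z' i)))"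

definition assumptionA :: "nat \<Rightarrow> nat \<Rightarrow> (nat \<Rightarrow> nat) \<Rightarrow> (nat \<Rightarrow> nat \<Rightarrow> real) \<Rightarrow> (nat \<Rightarrow> nat \<Rightarrow> nat \<Rightarrow> real)
     \<Rightarrow> (nat \<Rightarrow> real) \<Rightarrow> (nat \<Rightarrow> real) \<Rightarrow> (nat \<Rightarrow> (nat \<Rightarrow> real) set) \<Rightarrow> bool" where
  "assumptionA N S n c A b rv X \<longleftrightarrow> (\<exists>z. lpr_feas N S n A b rv X z) \<and>
      (\<exists>z. lpr_opt N S n c A b rv X z \<and>
           (\<forall>z'. lpr_opt N S n c A b rv X z' \<longrightarrow> (\<forall>i<N. z' i = z i)))"

definition assumptionB :: "(nat \<Rightarrow> real) \<Rightarrow> bool" where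
  "assumptionB \<alpha> \<longleftrightarrow> (\<forall>t. 0 \<le> \<alpha> t) \<and> filterlim (\<lambda>T. \<Sum>t<T. \<alpha> t) at_top sequentially \<and>
      summable (\<lambda>t. (\<alpha> t)\<^sup>2)"

definition zeta :: "nat \<Rightarrow> nat \<Rightarrow> (nat \<Rightarrow> nat) \<Rightarrow> (nat \<Rightarrow> nat \<Rightarrow> nat \<Rightarrow> real) \<Rightarrow> (nat \<Rightarrow> real)
     \<Rightarrow> (nat \<Rightarrow> real) \<Rightarrow> (nat \<Rightarrow> nat \<Rightarrow> real) \<Rightarrow> real" where
  "zeta N S n A b rv zh = Min ((\<lambda>s. b s - rv s - (\<Sum>i<N. dotp (n i) (A i s) (zh i))) ` {..<S})"

definition slater_point :: "nat \<Rightarrow> nat \<Rightarrow> (nat \<Rightarrow> nat) \<Rightarrow> (nat \<Rightarrow> nat \<Rightarrow> nat \<Rightarrow> real) \<Rightarrow> (nat \<Rightarrow> real)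
     \<Rightarrow> (nat \<Rightarrow> real) \<Rightarrow> (nat \<Rightarrow> (nat \<Rightarrow> real) set) \<Rightarrow> (nat \<Rightarrow> nat \<Rightarrow> real) \<Rightarrow> bool" where
  "slater_point N S n A b rv X zh \<longleftrightarrow> (\<forall>i<N. zh i \<in> convh (X i)) \<and> zeta N S n A b rv zh > 0"

definition Lmin :: "nat \<Rightarrow> (nat \<Rightarrow> nat \<Rightarrow> real) \<Rightarrow> (nat \<Rightarrow> real) set \<Rightarrow> nat \<Rightarrow> real" where
  "Lmin k As X s = Inf {dotp k (As s) x | x. x \<in> X}"

definition xL_opt :: "nat \<Rightarrow> (nat \<Rightarrow> nat \<Rightarrow> real) \<Rightarrow> nat \<Rightarrow> (nat \<Rightarrow> real) set
     \<Rightarrow> (nat \<Rightarrow> real) \<Rightarrow> real \<Rightarrow> bool" where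
  "xL_opt k As S X xl l \<longleftrightarrow> xl \<in> X \<and> (\<forall>s<S. dotp k (As s) xl - Lmin k As X s \<le> l) \<and>
      (\<forall>x l'. x \<in> X \<and> (\<forall>s<S. dotp k (As s) x - Lmin k As X s \<le> l') \<longrightarrow> l \<le> l')"

definition sigma_asy :: "nat \<Rightarrow> nat \<Rightarrow> (nat \<Rightarrow> nat) \<Rightarrow> (nat \<Rightarrow> nat \<Rightarrow> nat \<Rightarrow> real)
     \<Rightarrow> (nat \<Rightarrow> (nat \<Rightarrow> real) set) \<Rightarrow> (nat \<Rightarrow> nat \<Rightarrow> real) \<Rightarrow> real" where
  "sigma_asy N S n A X xL = real (S + 1) *
      Max ((\<lambda>(i, s). dotp (n i) (A i s) (xL i) - Lmin (n i) (A i) (X i) s) ` ({..<N} \<times> {..<S}))"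

definition p1_feas :: "nat \<Rightarrow> (nat \<Rightarrow> nat \<Rightarrow> real) \<Rightarrow> nat \<Rightarrow> (nat \<Rightarrow> real) set
     \<Rightarrow> (nat \<Rightarrow> real) \<Rightarrow> (nat \<Rightarrow> real) \<Rightarrow> real \<Rightarrow> bool" where
  "p1_feas k As S X yv z v \<longleftrightarrow> z \<in> convh X \<and> 0 \<le> v \<and> (\<forall>s<S. dotp k (As s) z \<le> yv s + v)"

definition p1_lagr :: "nat \<Rightarrow> (nat \<Rightarrow> real) \<Rightarrow> (nat \<Rightarrow> nat \<Rightarrow> real) \<Rightarrow> nat \<Rightarrow> real
     \<Rightarrow> (nat \<Rightarrow> real) \<Rightarrow> (nat \<Rightarrow> real) \<Rightarrow> (nat \<Rightarrow> real) \<Rightarrow> real \<Rightarrow> real" where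
  "p1_lagr k cv As S M yv mu z v =
     dotp k cv z + M * v + (\<Sum>s<S. mu s * (dotp k (As s) z - yv s - v))"

definition p1_dualfun :: "nat \<Rightarrow> (nat \<Rightarrow> real) \<Rightarrow> (nat \<Rightarrow> nat \<Rightarrow> real) \<Rightarrow> nat \<Rightarrow> (nat \<Rightarrow> real) set \<Rightarrow> real
     \<Rightarrow> (nat \<Rightarrow> real) \<Rightarrow> (nat \<Rightarrow> real) \<Rightarrow> ereal" where
  "p1_dualfun k cv As S X M yv mu =
     (INF zv \<in> convh X \<times> {0..}. ereal (p1_lagr k cv As S M yv mu (fst zv) (snd zv)))"

definition p1_pd_opt :: "nat \<Rightarrow> (nat \<Rightarrow> real) \<Rightarrow> (nat \<Rightarrow> nat \<Rightarrow> real) \<Rightarrow> nat \<Rightarrow> (nat \<Rightarrow> real) set \<Rightarrow> real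
     \<Rightarrow> (nat \<Rightarrow> real) \<Rightarrow> (nat \<Rightarrow> real) \<Rightarrow> real \<Rightarrow> (nat \<Rightarrow> real) \<Rightarrow> bool" where
  "p1_pd_opt k cv As S X M yv z v mu \<longleftrightarrow>
     p1_feas k As S X yv z v \<and>
     (\<forall>z' v'. p1_feas k As S X yv z' v' \<longrightarrow> dotp k cv z + M * v \<le> dotp k cv z' + M * v') \<and>
     (\<forall>s<S. 0 \<le> mu s) \<and>
     (\<forall>mu'. (\<forall>s<S. 0 \<le> mu' s) \<longrightarrow> p1_dualfun k cv As S X M yv mu' \<le> p1_dualfun k cv As S X M yv mu)"

definition p3_feas :: "nat \<Rightarrow> (nat \<Rightarrow> real) \<Rightarrow> (nat \<Rightarrow> nat \<Rightarrow> real) \<Rightarrow> nat \<Rightarrow> (nat \<Rightarrow> real) set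
     \<Rightarrow> (nat \<Rightarrow> real) \<Rightarrow> (nat \<Rightarrow> real) \<Rightarrow> real \<Rightarrow> real \<Rightarrow> bool" where
  "p3_feas k cv As S X yv x \<rho> \<xi> \<longleftrightarrow> x \<in> X \<and> 0 \<le> \<rho> \<and> dotp k cv x \<le> \<xi> \<and>
      (\<forall>s<S. dotp k (As s) x \<le> yv s + \<rho>)"

definition p3_lexopt :: "nat \<Rightarrow> (nat \<Rightarrow> real) \<Rightarrow> (nat \<Rightarrow> nat \<Rightarrow> real) \<Rightarrow> nat \<Rightarrow> (nat \<Rightarrow> real) set
     \<Rightarrow> (nat \<Rightarrow> real) \<Rightarrow> (nat \<Rightarrow> real) \<Rightarrow> real \<Rightarrow> real \<Rightarrow> bool" where
  "p3_lexopt k cv As S X yv x \<rho> \<xi> \<longleftrightarrow> p3_feas k cv As S X yv x \<rho> \<xi> \<and>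
      (\<forall>x' \<rho>' \<xi>'. p3_feas k cv As S X yv x' \<rho>' \<xi>' \<longrightarrow> \<rho> \<le> \<rho>') \<and>
      (\<forall>x' \<xi>'. p3_feas k cv As S X yv x' \<rho> \<xi>' \<longrightarrow> \<xi> \<le> \<xi>')"

definition conn_undirected :: "nat \<Rightarrow> (nat \<Rightarrow> nat set) \<Rightarrow> bool" where
  "conn_undirected N Nb \<longleftrightarrow> (\<forall>i<N. Nb i \<subseteq> {..<N} \<and> (\<forall>j\<in>Nb i. i \<in> Nb j)) \<and>
      (\<forall>i<N. \<forall>j<N. (i, j) \<in> {(a, b). a < N \<and> b \<in> Nb a}\<^sup>*)"

definition algo_run :: "nat \<Rightarrow> nat \<Rightarrow> (nat \<Rightarrow> nat) \<Rightarrow> (nat \<Rightarrow> nat \<Rightarrow> real) \<Rightarrow> (nat \<Rightarrow> nat \<Rightarrow> nat \<Rightarrow> real)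
     \<Rightarrow> (nat \<Rightarrow> real) \<Rightarrow> (nat \<Rightarrow> real) \<Rightarrow> (nat \<Rightarrow> (nat \<Rightarrow> real) set) \<Rightarrow> (nat \<Rightarrow> nat set) \<Rightarrow> real
     \<Rightarrow> (nat \<Rightarrow> real) \<Rightarrow> (nat \<Rightarrow> nat \<Rightarrow> nat \<Rightarrow> real) \<Rightarrow> (nat \<Rightarrow> nat \<Rightarrow> nat \<Rightarrow> real)
     \<Rightarrow> (nat \<Rightarrow> nat \<Rightarrow> real) \<Rightarrow> (nat \<Rightarrow> nat \<Rightarrow> nat \<Rightarrow> real) \<Rightarrow> bool" where
  "algo_run N S n c A b rv X Nb M \<alpha> y z v mu \<longleftrightarrow>
     (\<forall>s<S. (\<Sum>i<N. y 0 i s) = b s - rv s) \<and>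
     (\<forall>t. \<forall>i<N. p1_pd_opt (n i) (c i) (A i) S (X i) M (y t i) (z t i) (v t i) (mu t i)) \<and>
     (\<forall>t. \<forall>i<N. \<forall>s<S. y (Suc t) i s = y t i s + \<alpha> t * (\<Sum>j\<in>Nb i. mu t i s - mu t j s))"

end

theory Submission
  imports Defs
begin

lemma lin_dep_exists:
  fixes a :: "'a \<Rightarrow> nat \<Rightarrow> real"
  assumes "finite J" "card J > m"
  shows "\<exists>l. (\<exists>j\<in>J. l j \<noteq> 0) \<and> (\<forall>c<m. (\<Sum>j\<in>J. l j * a j c) = 0)"
  using assms
proof (induction m arbitrary: J a)
  case 0
  then obtain j where "j \<in> J" by (metis card.empty ex_in_conv less_irrefl)
  then show ?case by (rule_tac x="\<lambda>_. 1" in exI) auto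
next
  case (Suc m)
  show ?case
  proof (cases "\<forall>j\<in>J. a j m = 0")
    case True
    from Suc.IH[of J a] Suc.prems obtain l where l: "\<exists>j\<in>J. l j \<noteq> 0" "\<forall>c<m. (\<Sum>j\<in>J. l j * a j c) = 0" by auto
    have "\<forall>c<Suc m. (\<Sum>j\<in>J. l j * a j c) = 0"
    proof (intro allI impI)
      fix c assume "c < Suc m"
      then consider "c < m" | "c = m" by linarith
      then show "(\<Sum>j\<in>J. l j * a j c) = 0" using l True by cases auto
    qed
    with l show ?thesis by blast
  next
    case False
    then obtain j0 where j0: "j0 \<in> J" "a j0 m \<noteq> 0" by auto
    define J' where "J' = J - {j0}"
    define b where "b j c = a j c - (a j m / a j0 m) * a j0 c" for j c
    have fJ': "finite J'" "card J' > m" using Suc.prems j0 unfolding J'_def by auto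
    from Suc.IH[OF fJ'] obtain l where l: "\<exists>j\<in>J'. l j \<noteq> 0" "\<forall>c<m. (\<Sum>j\<in>J'. l j * b j c) = 0" by blast
    define l' where "l' j = (if j = j0 then - (\<Sum>i\<in>J'. l i * a i m) / a j0 m else l j)" for j
    have key: "(\<Sum>j\<in>J. l' j * a j c) = (\<Sum>j\<in>J'. l j * b j c)" for c
    proof -
      have "(\<Sum>j\<in>J. l' j * a j c) = l' j0 * a j0 c + (\<Sum>j\<in>J'. l' j * a j c)"
        unfolding J'_def using Suc.prems j0 by (simp add: sum.remove)
      also have "(\<Sum>j\<in>J'. l' j * a j c) = (\<Sum>j\<in>J'. l j * a j c)"
        unfolding l'_def J'_def by (intro sum.cong) auto
      also have "(\<Sum>j\<in>J'. l j * b j c) = (\<Sum>j\<in>J'. l j * a j c) - (\<Sum>j\<in>J'. l j * a j m) / a j0 m * a j0 c"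
        unfolding b_def by (simp add: algebra_simps sum_subtractf sum_distrib_left sum_divide_distrib sum_distrib_right)
      ultimately show ?thesis unfolding l'_def by (simp add: algebra_simps)
    qed
    have "\<forall>c<Suc m. (\<Sum>j\<in>J. l' j * a j c) = 0"
    proof (intro allI impI)
      fix c assume "c < Suc m"
      then consider "c < m" | "c = m" by linarith
      then show "(\<Sum>j\<in>J. l' j * a j c) = 0"
      proof cases
        case 1 then show ?thesis using key l by auto
      next
        case 2 then show ?thesis using key j0 by (simp add: b_def)
      qed
    qed
    moreover have "\<exists>j\<in>J. l' j \<noteq> 0" using l(1) unfolding l'_def J'_def by auto
    ultimately show ?thesis by blast
  qed
qed

definition lin :: "(nat \<Rightarrow> real) \<Rightarrow> nat \<Rightarrow> (nat \<Rightarrow> real) \<Rightarrow> real" where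
  "lin g k u = (\<Sum>s<k. g s * u s)"

lemma lin_comb: "lin g k (\<lambda>c. a * u c + b * w c) = a * lin g k u + b * lin g k w"
  unfolding lin_def by (simp add: algebra_simps sum.distrib sum_distrib_left)

lemma minorant_step:
  fixes f :: "(nat \<Rightarrow> real) \<Rightarrow> real"
  assumes cvx: "\<And>u w \<theta>. 0 \<le> \<theta> \<Longrightarrow> \<theta> \<le> 1 \<Longrightarrow> f (\<lambda>s. \<theta> * u s + (1-\<theta>) * w s) \<le> \<theta> * f u + (1-\<theta>) * f w"
    and H: "\<And>u. (\<forall>s\<ge>k. u s = 0) \<Longrightarrow> f (\<lambda>_. 0) + lin g k u \<le> f u"
  shows "\<exists>g'. \<forall>u. (\<forall>s\<ge>Suc k. u s = 0) \<longrightarrow> f (\<lambda>_. 0) + lin g' (Suc k) u \<le> f u"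
proof -
  define f0 where "f0 = f (\<lambda>_. 0)"
  define e where "e = (\<lambda>s::nat. if s = k then (1::real) else 0)"
  define lo where "lo y s' = (f0 + lin g k y - f (\<lambda>c. y c - s' * e c)) / s'" for y s'
  define up where "up x t = (f (\<lambda>c. x c + t * e c) - f0 - lin g k x) / t" for x t
  have key: "lo y s' \<le> up x t" if y: "\<forall>s\<ge>k. y s = 0" and x: "\<forall>s\<ge>k. x s = 0" and s': "s' > 0" and t: "t > 0" for x y s' t
  proof -
    define \<theta> where "\<theta> = t / (s' + t)"
    have th: "0 \<le> \<theta>" "\<theta> \<le> 1" "1 - \<theta> = s' / (s' + t)" using s' t unfolding \<theta>_def by (auto simp: field_simps)
    define m where "m = (\<lambda>c. \<theta> * y c + (1 - \<theta>) * x c)"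
    have m_eq: "(\<lambda>c. \<theta> * (y c - s' * e c) + (1 - \<theta>) * (x c + t * e c)) = m"
    proof
      fix c
      have "\<theta> * s' = (1 - \<theta>) * t" using th(3) s' t unfolding \<theta>_def by (auto simp: field_simps)
      then have H: "\<theta> * (s' * e c) = (1 - \<theta>) * (t * e c)" by (metis mult.assoc)
      have "\<theta> * (y c - s' * e c) + (1 - \<theta>) * (x c + t * e c) = \<theta> * y c + (1-\<theta>)*x c + ((1-\<theta>)*(t*e c) - \<theta>*(s'*e c))"
        by (simp add: algebra_simps)
      then show "\<theta> * (y c - s' * e c) + (1 - \<theta>) * (x c + t * e c) = m c"
        unfolding m_def using H by simp
    qed
    have msupp: "\<forall>s\<ge>k. m s = 0" using x y unfolding m_def by auto
    have "f0 + lin g k m \<le> f m" using H[OF msupp] unfolding f0_def .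
    also have "f m \<le> \<theta> * f (\<lambda>c. y c - s' * e c) + (1 - \<theta>) * f (\<lambda>c. x c + t * e c)"
      using cvx[OF th(1,2), of "\<lambda>c. y c - s' * e c" "\<lambda>c. x c + t * e c"] m_eq by simp
    finally have A: "0 \<le> \<theta> * (f (\<lambda>c. y c - s' * e c) - f0 - lin g k y) + (1 - \<theta>) * (f (\<lambda>c. x c + t * e c) - f0 - lin g k x)"
      unfolding m_def lin_comb by (simp add: algebra_simps)
    define Av where "Av = f (\<lambda>c. y c - s' * e c) - f0 - lin g k y"
    define Bv where "Bv = f (\<lambda>c. x c + t * e c) - f0 - lin g k x"
    have c1: "(s' + t) * \<theta> = t" and c2: "(s' + t) * (1 - \<theta>) = s'"
      using s' t th(3) unfolding \<theta>_def by (auto simp: field_simps)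
    have "0 \<le> t * Av + s' * Bv"
    proof -
      have "0 \<le> (s' + t) * (\<theta> * Av + (1 - \<theta>) * Bv)" using A s' t unfolding Av_def Bv_def by simp
      also have "(s' + t) * (\<theta> * Av + (1 - \<theta>) * Bv) = ((s' + t) * \<theta>) * Av + ((s' + t) * (1 - \<theta>)) * Bv"
        by (simp only: distrib_left mult.assoc)
      finally show ?thesis unfolding c1 c2 .
    qed
    then have "0 \<le> (t * Av + s' * Bv) / (s' * t)" using s' t by simp
    also have "(t * Av + s' * Bv) / (s' * t) = Av / s' + Bv / t" using s' t by (simp add: field_simps)
    finally have fin: "- Av / s' \<le> Bv / t" by simp
    have "lo y s' = - Av / s'" unfolding lo_def Av_def by (simp add: minus_divide_left[symmetric])
    moreover have "up x t = Bv / t" unfolding up_def Bv_def by simp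
    ultimately show ?thesis using fin by simp
  qed
  define LS where "LS = {lo y s' | y s'. (\<forall>s\<ge>k. y s = 0) \<and> s' > 0}"
  define a where "a = Sup LS"
  have z0: "\<forall>s\<ge>k. (\<lambda>_::nat. 0::real) s = 0" by simp
  have "lo (\<lambda>_. 0) 1 \<in> LS" unfolding LS_def by (intro CollectI exI[of _ "\<lambda>_. 0"] exI[of _ "1::real"]) simp
  then have LSne: "LS \<noteq> {}" by auto
  have "\<forall>l\<in>LS. l \<le> up (\<lambda>_. 0) 1"
  proof
    fix l assume "l \<in> LS"
    then obtain y s' where "l = lo y s'" "\<forall>s\<ge>k. y s = 0" "s' > 0" unfolding LS_def by blast
    then show "l \<le> up (\<lambda>_. 0) 1" using key[of y "\<lambda>_. 0" s' 1] z0 by simp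
  qed
  then have LSbdd: "bdd_above LS" unfolding bdd_above_def by blast
  have a_ge: "lo y s' \<le> a" if "\<forall>s\<ge>k. y s = 0" "s' > 0" for y s'
    unfolding a_def using that LSbdd by (intro cSup_upper) (auto simp: LS_def)
  have a_le: "a \<le> up x t" if "\<forall>s\<ge>k. x s = 0" "t > 0" for x t
    unfolding a_def using that LSne by (intro cSup_least) (auto simp: LS_def intro: key)
  define g' where "g' = (\<lambda>s. if s = k then a else g s)"
  show ?thesis
  proof (intro exI allI impI)
    fix u :: "nat \<Rightarrow> real" assume u: "\<forall>s\<ge>Suc k. u s = 0"
    define x where "x = u(k := 0)"
    define t where "t = u k"
    have xs: "\<forall>s\<ge>k. x s = 0" using u unfolding x_def by (auto simp: le_Suc_eq)
    have u_eq: "u = (\<lambda>c. x c + t * e c)" unfolding x_def t_def e_def by auto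
    have u_eq2: "u = (\<lambda>c. x c - (-t) * e c)" unfolding x_def t_def e_def by auto
    have lin_eq: "lin g' (Suc k) u = lin g k x + a * t"
    proof -
      have "lin g' (Suc k) u = (\<Sum>s<k. g' s * u s) + g' k * u k" unfolding lin_def by simp
      also have "(\<Sum>s<k. g' s * u s) = lin g k x" unfolding lin_def g'_def x_def by (intro sum.cong) auto
      finally show ?thesis by (simp add: g'_def t_def)
    qed
    consider "t > 0" | "t < 0" | "t = 0" by linarith
    then show "f (\<lambda>_. 0) + lin g' (Suc k) u \<le> f u"
    proof cases
      case 1
      have "a * t \<le> up x t * t" using a_le[OF xs 1] 1 by (simp add: mult_right_mono)
      also have "up x t * t = f u - f0 - lin g k x" unfolding up_def using 1 u_eq by simp
      finally show ?thesis using lin_eq unfolding f0_def by simp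
    next
      case 2
      have "lo x (-t) * (-t) \<le> a * (-t)" using a_ge[OF xs, of "-t"] 2 by (simp add: mult_right_mono)
      moreover have "lo x (-t) * (-t) = f0 + lin g k x - f u" unfolding lo_def using 2 u_eq2 by simp
      ultimately show ?thesis using lin_eq unfolding f0_def by simp
    next
      case 3
      then have "u = x" using u_eq by simp
      then show ?thesis using H[OF xs] lin_eq 3 by simp
    qed
  qed
qed

lemma minorant:
  fixes f :: "(nat \<Rightarrow> real) \<Rightarrow> real"
  assumes cvx: "\<And>u w \<theta>. 0 \<le> \<theta> \<Longrightarrow> \<theta> \<le> 1 \<Longrightarrow> f (\<lambda>s. \<theta> * u s + (1-\<theta>) * w s) \<le> \<theta> * f u + (1-\<theta>) * f w"
  shows "\<exists>g. \<forall>u. (\<forall>s\<ge>k. u s = 0) \<longrightarrow> f (\<lambda>_. 0) + lin g k u \<le> f u"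
proof (induction k)
  case 0
  show ?case
  proof (intro exI allI impI)
    fix u :: "nat \<Rightarrow> real" assume "\<forall>s\<ge>0. u s = 0"
    then have "u = (\<lambda>_. 0)" by auto
    then show "f (\<lambda>_. 0) + lin (\<lambda>_. 0) 0 u \<le> f u" by (simp add: lin_def)
  qed
next
  case (Suc k)
  then obtain g where H: "\<And>u. (\<forall>s\<ge>k. u s = 0) \<Longrightarrow> f (\<lambda>_. 0) + lin g k u \<le> f u" by blast
  show ?case by (rule minorant_step[of f k g, OF cvx H]) auto
qed

lemma dotp_lin: "dotp k u (\<lambda>j. a * z1 j + b * z2 j) = a * dotp k u z1 + b * dotp k u z2"
  unfolding dotp_def by (simp add: algebra_simps sum.distrib sum_distrib_left)

lemma dotp_sum: "finite F \<Longrightarrow> dotp k u (\<lambda>j. \<Sum>x\<in>F. w x * x j) = (\<Sum>x\<in>F. w x * dotp k u x)"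
  unfolding dotp_def by (simp add: sum_distrib_left sum_distrib_right algebra_simps sum.swap[of _ F])

lemma convh_base: "x \<in> X \<Longrightarrow> x \<in> convh X"
  unfolding convh_def by (intro CollectI exI[of _ "{x}"] exI[of _ "\<lambda>_. 1"]) auto

lemma convh_convex:
  assumes "z1 \<in> convh X" "z2 \<in> convh X" "0 \<le> \<theta>" "\<theta> \<le> 1"
  shows "(\<lambda>j. \<theta> * z1 j + (1 - \<theta>) * z2 j) \<in> convh X"
proof -
  obtain F1 w1 where 1: "finite F1" "F1 \<subseteq> X" "\<forall>x\<in>F1. 0 \<le> w1 x" "sum w1 F1 = 1" "z1 = (\<lambda>j. \<Sum>x\<in>F1. w1 x * x j)"
    using assms(1) unfolding convh_def by blast
  obtain F2 w2 where 2: "finite F2" "F2 \<subseteq> X" "\<forall>x\<in>F2. 0 \<le> w2 x" "sum w2 F2 = 1" "z2 = (\<lambda>j. \<Sum>x\<in>F2. w2 x * x j)"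
    using assms(2) unfolding convh_def by blast
  define F where "F = F1 \<union> F2"
  define w1' where "w1' x = (if x \<in> F1 then w1 x else 0)" for x
  define w2' where "w2' x = (if x \<in> F2 then w2 x else 0)" for x
  define w where "w x = \<theta> * w1' x + (1 - \<theta>) * w2' x" for x
  have fF: "finite F" using 1 2 unfolding F_def by auto
  have s1: "(\<Sum>x\<in>F. w1' x * g x) = (\<Sum>x\<in>F1. w1 x * g x)" for g :: "_ \<Rightarrow> real"
  proof -
    have "(\<Sum>x\<in>F. w1' x * g x) = (\<Sum>x\<in>F. if x \<in> F1 then w1 x * g x else 0)"
      unfolding w1'_def by (intro sum.cong) auto
    also have "\<dots> = (\<Sum>x\<in>F \<inter> F1. w1 x * g x)" using fF by (simp add: sum.inter_restrict)
    also have "F \<inter> F1 = F1" unfolding F_def by auto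
    finally show ?thesis .
  qed
  have s2: "(\<Sum>x\<in>F. w2' x * g x) = (\<Sum>x\<in>F2. w2 x * g x)" for g :: "_ \<Rightarrow> real"
  proof -
    have "(\<Sum>x\<in>F. w2' x * g x) = (\<Sum>x\<in>F. if x \<in> F2 then w2 x * g x else 0)"
      unfolding w2'_def by (intro sum.cong) auto
    also have "\<dots> = (\<Sum>x\<in>F \<inter> F2. w2 x * g x)" using fF by (simp add: sum.inter_restrict)
    also have "F \<inter> F2 = F2" unfolding F_def by auto
    finally show ?thesis .
  qed
  have gen: "(\<Sum>x\<in>F. w x * g x) = \<theta> * (\<Sum>x\<in>F1. w1 x * g x) + (1 - \<theta>) * (\<Sum>x\<in>F2. w2 x * g x)" for g :: "_ \<Rightarrow> real"
  proof -
    have "(\<Sum>x\<in>F. w x * g x) = (\<Sum>x\<in>F. \<theta> * (w1' x * g x) + (1 - \<theta>) * (w2' x * g x))"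
      unfolding w_def by (intro sum.cong) (auto simp: algebra_simps)
    also have "\<dots> = \<theta> * (\<Sum>x\<in>F. w1' x * g x) + (1 - \<theta>) * (\<Sum>x\<in>F. w2' x * g x)"
      by (simp add: sum.distrib sum_distrib_left)
    finally have "(\<Sum>x\<in>F. w x * g x) = \<theta> * (\<Sum>x\<in>F. w1' x * g x) + (1 - \<theta>) * (\<Sum>x\<in>F. w2' x * g x)" .
    then show ?thesis using s1 s2 by simp
  qed
  have "sum w F = 1" using gen[of "\<lambda>_. 1"] 1(4) 2(4) by simp
  moreover have "(\<lambda>j. \<theta> * z1 j + (1 - \<theta>) * z2 j) = (\<lambda>j. \<Sum>x\<in>F. w x * x j)"
    using gen 1(5) 2(5) by auto
  moreover have "\<forall>x\<in>F. 0 \<le> w x" using 1(3) 2(3) assms(3,4) unfolding w_def w1'_def w2'_def by auto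
  moreover have "F \<subseteq> X" using 1 2 unfolding F_def by auto
  ultimately show ?thesis unfolding convh_def using fF by blast
qed

lemma dotp_convh_lower:
  assumes "\<forall>x\<in>X. m \<le> dotp k u x" "z \<in> convh X"
  shows "m \<le> dotp k u z"
proof -
  obtain F w where 1: "finite F" "F \<subseteq> X" "\<forall>x\<in>F. 0 \<le> w x" "sum w F = 1" "z = (\<lambda>j. \<Sum>x\<in>F. w x * x j)"
    using assms(2) unfolding convh_def by blast
  have "m = (\<Sum>x\<in>F. w x * m)" using 1(4) by (simp add: sum_distrib_right[symmetric])
  also have "\<dots> \<le> (\<Sum>x\<in>F. w x * dotp k u x)"
    using 1 assms(1) by (intro sum_mono mult_left_mono) auto
  also have "\<dots> = dotp k u z" using 1(1,5) dotp_sum by simp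
  finally show ?thesis .
qed

lemma convh_zero:
  assumes "\<forall>x\<in>X. \<forall>j\<ge>k. x j = 0" "z \<in> convh X" "j \<ge> k"
  shows "z j = 0"
proof -
  obtain F w where 1: "finite F" "F \<subseteq> X" "z = (\<lambda>j. \<Sum>x\<in>F. w x * x j)"
    using assms(2) unfolding convh_def by blast
  have "\<forall>x\<in>F. w x * x j = 0" using 1(2) assms(1,3) by auto
  then have "(\<Sum>x\<in>F. w x * x j) = 0" by (intro sum.neutral) simp
  then show ?thesis using 1(3) by simp
qed

lemma caratheodory:
  assumes X0: "\<forall>x\<in>X. \<forall>j\<ge>k. x j = 0" and z: "z \<in> convh X"
  shows "\<exists>F w. finite F \<and> F \<subseteq> X \<and> card F \<le> Suc k \<and> (\<forall>x\<in>F. 0 \<le> w x) \<and> sum w F = 1 \<and>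
              z = (\<lambda>j. \<Sum>x\<in>F. w x * x j)"
proof -
  have main: "\<And>F w. card F = n \<Longrightarrow> finite F \<Longrightarrow> F \<subseteq> X \<Longrightarrow> (\<forall>x\<in>F. 0 \<le> w x) \<Longrightarrow> sum w F = 1 \<Longrightarrow>
              \<exists>F' w'. finite F' \<and> F' \<subseteq> X \<and> card F' \<le> Suc k \<and> (\<forall>x\<in>F'. 0 \<le> w' x) \<and> sum w' F' = 1 \<and>
              (\<lambda>j. \<Sum>x\<in>F. w x * x j) = (\<lambda>j. \<Sum>x\<in>F'. w' x * x j)" for n
  proof (induction n rule: less_induct)
    case (less n F w)
    show ?case
    proof (cases "card F \<le> Suc k")
      case True then show ?thesis using less.prems by blast
    next
      case False
      define a where "a x c = (if c < k then x c else 1)" for x :: "nat \<Rightarrow> real" and c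
      have cgt: "card F > Suc k" using False by simp
      obtain \<mu> where mu: "\<exists>x\<in>F. \<mu> x \<noteq> 0" "\<forall>c<Suc k. (\<Sum>x\<in>F. \<mu> x * a x c) = 0"
        using lin_dep_exists[OF less.prems(2) cgt, of a] by blast
      have musum: "(\<Sum>x\<in>F. \<mu> x) = 0" using mu(2)[rule_format, of k] unfolding a_def by simp
      have mucoord: "(\<Sum>x\<in>F. \<mu> x * x c) = 0" for c
      proof (cases "c < k")
        case True then show ?thesis using mu(2)[rule_format, of c] unfolding a_def by simp
      next
        case False then show ?thesis using X0 less.prems(3) by (intro sum.neutral) auto
      qed
      define Pos where "Pos = {x\<in>F. \<mu> x > 0}"
      have "Pos \<noteq> {}"
      proof
        assume "Pos = {}"
        then have "\<forall>x\<in>F. \<not> \<mu> x > 0" unfolding Pos_def by blast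
        then have np: "\<forall>x\<in>F. 0 \<le> - \<mu> x" by (simp add: not_less)
        have "(\<Sum>x\<in>F. - \<mu> x) = 0" using musum by (simp add: sum_negf)
        moreover have "(\<Sum>x\<in>F. - \<mu> x) = 0 \<longleftrightarrow> (\<forall>x\<in>F. - \<mu> x = 0)"
          by (rule sum_nonneg_eq_0_iff[OF less.prems(2)]) (use np in blast)
        ultimately have "\<forall>x\<in>F. - \<mu> x = 0" by blast
        then show False using mu(1) by auto
      qed
      have fPos: "finite Pos" using less.prems(2) unfolding Pos_def by auto
      define t where "t = Min ((\<lambda>x. w x / \<mu> x) ` Pos)"
      have "t \<in> (\<lambda>x. w x / \<mu> x) ` Pos" unfolding t_def using fPos \<open>Pos \<noteq> {}\<close> by (intro Min_in) simp_all
      then obtain x1 where x1: "x1 \<in> Pos" "t = w x1 / \<mu> x1" by blast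
      have tle: "t \<le> w x / \<mu> x" if "x \<in> Pos" for x unfolding t_def using fPos that by (intro Min_le) simp_all
      have "x1 \<in> F" "\<mu> x1 > 0" using x1(1) unfolding Pos_def by blast+
      then have t0: "0 \<le> t" using x1(2) less.prems(4) by simp
      define w' where "w' x = w x - t * \<mu> x" for x
      have w'0: "\<forall>x\<in>F. 0 \<le> w' x"
      proof
        fix x assume xF: "x \<in> F"
        show "0 \<le> w' x"
        proof (cases "\<mu> x > 0")
          case True
          then have "t \<le> w x / \<mu> x" using tle xF unfolding Pos_def by auto
          then have "t * \<mu> x \<le> w x" using True by (simp add: field_simps)
          then show ?thesis unfolding w'_def by simp
        next
          case False
          then have "t * \<mu> x \<le> 0" using t0 by (simp add: mult_nonneg_nonpos)
          then show ?thesis unfolding w'_def using less.prems(4) xF by auto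
        qed
      qed
      have x1F: "x1 \<in> F" and w'x1: "w' x1 = 0" using x1 unfolding Pos_def w'_def by auto
      have gen: "(\<Sum>x\<in>F. w' x * g x) = (\<Sum>x\<in>F. w x * g x) - t * (\<Sum>x\<in>F. \<mu> x * g x)" for g :: "_ \<Rightarrow> real"
        unfolding w'_def by (simp add: algebra_simps sum_subtractf sum_distrib_left)
      define F' where "F' = F - {x1}"
      have rem: "(\<Sum>x\<in>F'. w' x * g x) = (\<Sum>x\<in>F. w' x * g x)" for g :: "_ \<Rightarrow> real"
        unfolding F'_def using less.prems(2) x1F w'x1 by (simp add: sum.remove)
      have "card F' < card F" unfolding F'_def using less.prems(2) x1F by (rule card_Diff1_less)
      then have cF': "card F' < n" using less.prems(1) by simp
      have "sum w' F' = 1" using rem[of "\<lambda>_. 1"] gen[of "\<lambda>_. 1"] musum less.prems(5) by simp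
      moreover have eqz: "(\<lambda>j. \<Sum>x\<in>F'. w' x * x j) = (\<lambda>j. \<Sum>x\<in>F. w x * x j)"
        using rem gen mucoord by auto
      moreover have "finite F'" "F' \<subseteq> X" "\<forall>x\<in>F'. 0 \<le> w' x" using less.prems w'0 unfolding F'_def by auto
      ultimately have "finite F'" "F' \<subseteq> X" "\<forall>x\<in>F'. 0 \<le> w' x" "sum w' F' = 1"
        and eqz: "(\<lambda>j. \<Sum>x\<in>F'. w' x * x j) = (\<lambda>j. \<Sum>x\<in>F. w x * x j)" by blast+
      from less.IH[OF cF' refl this(1-4)] obtain F'' w'' where
        r: "finite F''" "F'' \<subseteq> X" "card F'' \<le> Suc k" "\<forall>x\<in>F''. 0 \<le> w'' x" "sum w'' F'' = 1"
           "(\<lambda>j. \<Sum>x\<in>F'. w' x * x j) = (\<lambda>j. \<Sum>x\<in>F''. w'' x * x j)" by blast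
      show ?thesis using r eqz by (intro exI[of _ F''] exI[of _ w'']) simp
    qed
  qed
  obtain F w where "finite F" "F \<subseteq> X" "\<forall>x\<in>F. 0 \<le> w x" "sum w F = 1" "z = (\<lambda>j. \<Sum>x\<in>F. w x * x j)"
    using z unfolding convh_def by blast
  from main[OF refl this(1-4)] obtain F' w' where
    r: "finite F'" "F' \<subseteq> X" "card F' \<le> Suc k" "\<forall>x\<in>F'. 0 \<le> w' x" "sum w' F' = 1"
       "(\<lambda>j. \<Sum>x\<in>F. w x * x j) = (\<lambda>j. \<Sum>x\<in>F'. w' x * x j)" by blast
  show ?thesis using r \<open>z = _\<close> by (intro exI[of _ F'] exI[of _ w']) simp
qed

definition TK :: "nat \<Rightarrow> (nat \<Rightarrow> real) set \<Rightarrow> (nat \<Rightarrow> real \<times> (nat \<Rightarrow> real)) set" where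
  "TK K X = {f. (\<forall>j\<le>K. f j \<in> {0..1} \<times> X) \<and> (\<forall>j>K. f j = (0, \<lambda>_. 0)) \<and> (\<Sum>j\<le>K. fst (f j)) = 1}"

definition comb :: "nat \<Rightarrow> (nat \<Rightarrow> real \<times> (nat \<Rightarrow> real)) \<Rightarrow> nat \<Rightarrow> real" where
  "comb K f = (\<lambda>c. \<Sum>j\<le>K. fst (f j) * snd (f j) c)"

lemma cont_fst_coord: "continuous_on UNIV (\<lambda>f::nat \<Rightarrow> real \<times> (nat \<Rightarrow> real). fst (f j))"
  by (intro continuous_on_fst continuous_on_product_coordinates)

lemma cont_snd_coord: "continuous_on UNIV (\<lambda>f::nat \<Rightarrow> real \<times> (nat \<Rightarrow> real). snd (f j) c)"
proof -
  have "continuous_on UNIV (\<lambda>f::nat \<Rightarrow> real \<times> (nat \<Rightarrow> real). snd (f j))"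
    by (intro continuous_on_snd continuous_on_product_coordinates)
  then show ?thesis by (rule continuous_on_product_then_coordinatewise)
qed

lemma cont_comb_coord: "continuous_on UNIV (\<lambda>f. comb K f c)"
  unfolding comb_def by (intro continuous_on_sum continuous_on_mult cont_fst_coord cont_snd_coord)

lemma cont_comb: "continuous_on UNIV (comb K)"
  by (rule continuous_on_coordinatewise_then_product) (rule cont_comb_coord)

lemma cont_dotp: "continuous_on UNIV (\<lambda>z::nat \<Rightarrow> real. dotp k u z)"
  unfolding dotp_def by (intro continuous_on_sum continuous_on_mult continuous_on_const continuous_on_product_coordinates)

lemma cont_dotp_comb: "continuous_on UNIV (\<lambda>f. dotp k u (comb K f))"
  unfolding dotp_def by (intro continuous_on_sum continuous_on_mult continuous_on_const cont_comb_coord)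

lemma PiE_UNIV_iff: "f \<in> PiE UNIV S \<longleftrightarrow> (\<forall>j. f j \<in> S j)" unfolding PiE_UNIV_domain Pi_iff by simp

lemma compact_TK:
  assumes "compact X"
  shows "compact (TK K X)"
proof -
  define S where "S j = (if j \<le> K then {0..1::real} \<times> X else {(0::real, \<lambda>_::nat. 0::real)})" for j
  have cS: "compact (S j)" for j unfolding S_def using assms by (auto intro: compact_Times)
  have "compactin (product_topology (\<lambda>_. euclidean) UNIV) (PiE UNIV S)"
    unfolding compactin_PiE using cS by simp
  then have c1: "compact (PiE UNIV S)" by (simp add: euclidean_product_topology)
  have c2: "closed {f::nat \<Rightarrow> real \<times> (nat \<Rightarrow> real). (\<Sum>j\<le>K. fst (f j)) = 1}"
    by (intro closed_Collect_eq continuous_on_sum cont_fst_coord continuous_on_const)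
  have eq: "TK K X = PiE UNIV S \<inter> {f. (\<Sum>j\<le>K. fst (f j)) = 1}"
  proof (rule set_eqI)
    fix f :: "nat \<Rightarrow> real \<times> (nat \<Rightarrow> real)"
    have "(\<forall>j. f j \<in> S j) \<longleftrightarrow> (\<forall>j\<le>K. f j \<in> {0..1} \<times> X) \<and> (\<forall>j>K. f j = (0, \<lambda>_. 0))"
    proof
      assume H: "\<forall>j. f j \<in> S j"
      show "(\<forall>j\<le>K. f j \<in> {0..1} \<times> X) \<and> (\<forall>j>K. f j = (0, \<lambda>_. 0))"
      proof (intro conjI allI impI)
        fix j assume "j \<le> K" then show "f j \<in> {0..1} \<times> X" using H[rule_format, of j] unfolding S_def by simp
      next
        fix j assume "K < j" then show "f j = (0, \<lambda>_. 0)" using H[rule_format, of j] unfolding S_def by simp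
      qed
    next
      assume H: "(\<forall>j\<le>K. f j \<in> {0..1} \<times> X) \<and> (\<forall>j>K. f j = (0, \<lambda>_. 0))"
      show "\<forall>j. f j \<in> S j"
      proof
        fix j show "f j \<in> S j"
        proof (cases "j \<le> K")
          case True then show ?thesis using H unfolding S_def by simp
        next
          case False then have "K < j" by simp
          then show ?thesis using H unfolding S_def by simp
        qed
      qed
    qed
    then show "f \<in> TK K X \<longleftrightarrow> f \<in> PiE UNIV S \<inter> {f. (\<Sum>j\<le>K. fst (f j)) = 1}"
      using PiE_UNIV_iff[of f S] unfolding TK_def by simp
  qed
  show ?thesis unfolding eq using c1 c2 by (rule compact_Int_closed)
qed

lemma comb_in_convh:
  assumes "f \<in> TK K X"
  shows "comb K f \<in> convh X"
proof -
  have f: "\<forall>j\<le>K. f j \<in> {0..1} \<times> X" "(\<Sum>j\<le>K. fst (f j)) = 1" using assms unfolding TK_def by auto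
  define F where "F = (\<lambda>j. snd (f j)) ` {..K}"
  define w where "w x = (\<Sum>j\<in>{j\<in>{..K}. snd (f j) = x}. fst (f j))" for x
  have gen: "(\<Sum>x\<in>F. w x * g x) = (\<Sum>j\<le>K. fst (f j) * g (snd (f j)))" for g :: "_ \<Rightarrow> real"
  proof -
    have "(\<Sum>j\<le>K. fst (f j) * g (snd (f j))) =
          (\<Sum>x\<in>F. \<Sum>j\<in>{j\<in>{..K}. snd (f j) = x}. fst (f j) * g (snd (f j)))"
      unfolding F_def by (rule sum.image_gen) simp
    also have "\<dots> = (\<Sum>x\<in>F. w x * g x)"
      unfolding w_def sum_distrib_right by (intro sum.cong refl) auto
    finally show ?thesis by simp
  qed
  have "finite F" "F \<subseteq> X" using f(1) unfolding F_def by auto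
  moreover have "\<forall>x\<in>F. 0 \<le> w x" unfolding w_def using f(1) by (auto intro!: sum_nonneg)
  moreover have "sum w F = 1" using gen[of "\<lambda>_. 1"] f(2) by simp
  moreover have "comb K f = (\<lambda>c. \<Sum>x\<in>F. w x * x c)" unfolding comb_def using gen by auto
  ultimately show ?thesis unfolding convh_def by blast
qed

lemma convh_rep:
  assumes X0: "\<forall>x\<in>X. \<forall>j\<ge>k. x j = 0" and Xne: "X \<noteq> {}" and z: "z \<in> convh X"
  shows "\<exists>f\<in>TK k X. comb k f = z"
proof -
  obtain F w where Fw: "finite F" "F \<subseteq> X" "card F \<le> Suc k" "\<forall>x\<in>F. 0 \<le> w x" "sum w F = 1"
    "z = (\<lambda>j. \<Sum>x\<in>F. w x * x j)"
    using caratheodory[OF X0 z] by blast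
  obtain h where h: "bij_betw h {0..<card F} F" using ex_bij_betw_nat_finite[OF Fw(1)] by blast
  obtain x0 where x0: "x0 \<in> X" using Xne by blast
  define f where "f j = (if j < card F then (w (h j), h j) else if j \<le> k then (0, x0) else (0, \<lambda>_. 0))" for j
  have hF: "h j \<in> F" if "j < card F" for j using h that unfolding bij_betw_def by auto
  have wle: "w x \<le> 1" if "x \<in> F" for x
  proof -
    have "w x \<le> sum w F" using Fw(1,4) that by (intro member_le_sum) auto
    then show ?thesis using Fw(5) by simp
  qed
  have gen: "(\<Sum>j\<le>k. fst (f j) * g (snd (f j))) = (\<Sum>x\<in>F. w x * g x)" for g :: "_ \<Rightarrow> real"
  proof -
    have "(\<Sum>j\<le>k. fst (f j) * g (snd (f j))) = (\<Sum>j\<in>{0..<card F}. fst (f j) * g (snd (f j)))"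
      using Fw(3) unfolding f_def by (intro sum.mono_neutral_right) auto
    also have "\<dots> = (\<Sum>j\<in>{0..<card F}. w (h j) * g (h j))" unfolding f_def by (intro sum.cong) auto
    also have "\<dots> = (\<Sum>x\<in>F. w x * g x)" using sum.reindex_bij_betw[OF h, of "\<lambda>x. w x * g x"] by simp
    finally show ?thesis .
  qed
  have "f \<in> TK k X"
  proof -
    have "\<forall>j\<le>k. f j \<in> {0..1} \<times> X" unfolding f_def using hF wle Fw(2,4) x0 by auto
    moreover have "\<forall>j>k. f j = (0, \<lambda>_. 0)" unfolding f_def using Fw(3) by auto
    moreover have "(\<Sum>j\<le>k. fst (f j)) = 1" using gen[of "\<lambda>_. 1"] Fw(5) by simp
    ultimately show ?thesis unfolding TK_def by blast
  qed
  moreover have "comb k f = z" unfolding comb_def Fw(6)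
  proof
    fix c show "(\<Sum>j\<le>k. fst (f j) * snd (f j) c) = (\<Sum>x\<in>F. w x * x c)" using gen[of "\<lambda>x. x c"] .
  qed
  ultimately show ?thesis by blast
qed

lemma inf_comb:
  fixes A B :: "real set"
  assumes "A \<noteq> {}" "B \<noteq> {}" "bdd_below A" "bdd_below B" "0 \<le> \<theta>" "\<theta> \<le> 1"
    and H: "\<forall>a\<in>A. \<forall>b\<in>B. c \<le> \<theta> * a + (1 - \<theta>) * b"
  shows "c \<le> \<theta> * Inf A + (1 - \<theta>) * Inf B"
proof (rule ccontr)
  assume neg: "\<not> c \<le> \<theta> * Inf A + (1 - \<theta>) * Inf B"
  define \<epsilon> where "\<epsilon> = c - (\<theta> * Inf A + (1 - \<theta>) * Inf B)"
  have e: "\<epsilon> > 0" using neg unfolding \<epsilon>_def by simp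
  obtain a where a: "a \<in> A" "a < Inf A + \<epsilon>/2" using cInf_less_iff[OF assms(1,3), of "Inf A + \<epsilon>/2"] e by auto
  obtain b where b: "b \<in> B" "b < Inf B + \<epsilon>/2" using cInf_less_iff[OF assms(2,4), of "Inf B + \<epsilon>/2"] e by auto
  have "\<theta> * a \<le> \<theta> * (Inf A + \<epsilon>/2)" using a assms(5) by (intro mult_left_mono) auto
  moreover have "(1 - \<theta>) * b \<le> (1 - \<theta>) * (Inf B + \<epsilon>/2)" using b assms(6) by (intro mult_left_mono) auto
  moreover have "\<theta> * (Inf A + \<epsilon>/2) + (1 - \<theta>) * (Inf B + \<epsilon>/2) = \<theta> * Inf A + (1 - \<theta>) * Inf B + \<epsilon>/2"
    by (simp add: field_simps)
  ultimately have "\<theta> * a + (1 - \<theta>) * b \<le> \<theta> * Inf A + (1 - \<theta>) * Inf B + \<epsilon>/2" by linarith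
  also have "\<dots> < c" using e \<epsilon>_def by linarith
  finally show False using H a(1) b(1) by fastforce
qed

definition Pv :: "nat \<Rightarrow> (nat \<Rightarrow> real) \<Rightarrow> (nat \<Rightarrow> nat \<Rightarrow> real) \<Rightarrow> nat \<Rightarrow> (nat \<Rightarrow> real) set \<Rightarrow> real
     \<Rightarrow> (nat \<Rightarrow> real) \<Rightarrow> real" where
  "Pv k cv As S X M y = Inf {dotp k cv z + M * v | z v. p1_feas k As S X y z v}"

locale agent =
  fixes k :: nat and cv :: "nat \<Rightarrow> real" and As :: "nat \<Rightarrow> nat \<Rightarrow> real" and S :: nat
    and X :: "(nat \<Rightarrow> real) set" and M :: real
  assumes X0: "\<forall>x\<in>X. \<forall>j\<ge>k. x j = 0" and Xne: "X \<noteq> {}" and Xc: "compact X" and Mpos: "M > 0"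
begin

abbreviation "P \<equiv> Pv k cv As S X M"
abbreviation "feas \<equiv> p1_feas k As S X"

lemma cmin: "\<exists>Cm. \<forall>z\<in>convh X. Cm \<le> dotp k cv z"
proof -
  obtain x where "x \<in> X" "\<forall>y\<in>X. dotp k cv x \<le> dotp k cv y"
    using continuous_attains_inf[OF Xc Xne, of "dotp k cv"] continuous_on_subset[OF cont_dotp] by blast
  then show ?thesis using dotp_convh_lower by blast
qed

definition Cm where "Cm = (SOME Cm. \<forall>z\<in>convh X. Cm \<le> dotp k cv z)"

lemma Cm: "z \<in> convh X \<Longrightarrow> Cm \<le> dotp k cv z"
  using someI_ex[OF cmin] unfolding Cm_def by blast

lemma feas_ex: "\<exists>z v. feas y z v"
proof -
  obtain z0 where z0: "z0 \<in> X" using Xne by blast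
  define v where "v = (\<Sum>s<S. \<bar>dotp k (As s) z0 - y s\<bar>)"
  have "\<forall>s<S. dotp k (As s) z0 \<le> y s + v"
  proof (intro allI impI)
    fix s assume "s < S"
    then have "\<bar>dotp k (As s) z0 - y s\<bar> \<le> v" unfolding v_def by (intro member_le_sum) auto
    then show "dotp k (As s) z0 \<le> y s + v" by linarith
  qed
  moreover have "0 \<le> v" unfolding v_def by (intro sum_nonneg) auto
  ultimately show ?thesis using convh_base[OF z0] unfolding p1_feas_def by blast
qed

lemma feas_cost_lb: "feas y z v \<Longrightarrow> Cm \<le> dotp k cv z + M * v"
  unfolding p1_feas_def using Cm Mpos by (smt (verit) mult_nonneg_nonneg)

lemma Pset_ne: "{dotp k cv z + M * v | z v. feas y z v} \<noteq> {}" using feas_ex by blast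

lemma Pset_bdd: "bdd_below {dotp k cv z + M * v | z v. feas y z v}"
  unfolding bdd_below_def using feas_cost_lb by blast

lemma P_le: "feas y z v \<Longrightarrow> P y \<le> dotp k cv z + M * v"
  unfolding Pv_def by (rule cInf_lower[OF _ Pset_bdd]) blast

lemma P_ge: "(\<And>z v. feas y z v \<Longrightarrow> a \<le> dotp k cv z + M * v) \<Longrightarrow> a \<le> P y"
  unfolding Pv_def by (rule cInf_greatest[OF Pset_ne]) blast

lemma P_lb: "Cm \<le> P y"
  by (rule P_ge) (rule feas_cost_lb)

lemma P_cong: "(\<And>s. s < S \<Longrightarrow> y s = y' s) \<Longrightarrow> P y = P y'"
  unfolding Pv_def p1_feas_def by simp

lemma P_lip: "P y' \<le> P y + M * (\<Sum>s<S. \<bar>y s - y' s\<bar>)"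
proof -
  define d where "d = (\<Sum>s<S. \<bar>y s - y' s\<bar>)"
  have "P y' - M * d \<le> P y"
  proof (rule P_ge)
    fix z v assume f: "feas y z v"
    have "feas y' z (v + d)" unfolding p1_feas_def
    proof (intro conjI allI impI)
      show "z \<in> convh X" "0 \<le> v + d" using f unfolding p1_feas_def d_def by (auto intro!: sum_nonneg add_nonneg_nonneg)
    next
      fix s assume s: "s < S"
      have "\<bar>y s - y' s\<bar> \<le> d" unfolding d_def using s by (intro member_le_sum) auto
      then show "dotp k (As s) z \<le> y' s + (v + d)" using f s unfolding p1_feas_def by auto
    qed
    then have "P y' \<le> dotp k cv z + M * (v + d)" by (rule P_le)
    then show "P y' - M * d \<le> dotp k cv z + M * v" by (simp add: algebra_simps)
  qed
  then show ?thesis unfolding d_def by simp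
qed

lemma P_mono:
  assumes le: "\<And>s. s < S \<Longrightarrow> y s \<le> y' s" shows "P y' \<le> P y"
proof (rule P_ge)
  fix z v assume f: "feas y z v"
  have "feas y' z v" unfolding p1_feas_def
  proof (intro conjI allI impI)
    show "z \<in> convh X" "0 \<le> v" using f unfolding p1_feas_def by auto
  next
    fix s assume s: "s < S"
    then show "dotp k (As s) z \<le> y' s + v" using f le[OF s] unfolding p1_feas_def by fastforce
  qed
  then show "P y' \<le> dotp k cv z + M * v" by (rule P_le)
qed

lemma P_convex:
  assumes "0 \<le> \<theta>" "\<theta> \<le> 1"
  shows "P (\<lambda>s. \<theta> * y1 s + (1 - \<theta>) * y2 s) \<le> \<theta> * P y1 + (1 - \<theta>) * P y2"
  unfolding Pv_def
proof (rule inf_comb[OF Pset_ne Pset_ne Pset_bdd Pset_bdd assms], intro ballI)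
  fix a b assume "a \<in> {dotp k cv z + M * v |z v. feas y1 z v}" "b \<in> {dotp k cv z + M * v |z v. feas y2 z v}"
  then obtain z1 v1 z2 v2 where a: "a = dotp k cv z1 + M * v1" "feas y1 z1 v1"
    and b: "b = dotp k cv z2 + M * v2" "feas y2 z2 v2" by blast
  define z where "z = (\<lambda>j. \<theta> * z1 j + (1 - \<theta>) * z2 j)"
  define v where "v = \<theta> * v1 + (1 - \<theta>) * v2"
  have "feas (\<lambda>s. \<theta> * y1 s + (1 - \<theta>) * y2 s) z v" unfolding p1_feas_def
  proof (intro conjI allI impI)
    show "z \<in> convh X" unfolding z_def using a b assms by (intro convh_convex) (auto simp: p1_feas_def)
    show "0 \<le> v" unfolding v_def using a b assms by (auto simp: p1_feas_def intro!: add_nonneg_nonneg)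
  next
    fix s assume s: "s < S"
    have "\<theta> * dotp k (As s) z1 \<le> \<theta> * (y1 s + v1)" using a(2) s assms by (intro mult_left_mono) (auto simp: p1_feas_def)
    moreover have "(1 - \<theta>) * dotp k (As s) z2 \<le> (1 - \<theta>) * (y2 s + v2)" using b(2) s assms by (intro mult_left_mono) (auto simp: p1_feas_def)
    ultimately show "dotp k (As s) z \<le> \<theta> * y1 s + (1 - \<theta>) * y2 s + v"
      unfolding z_def v_def dotp_lin by (simp add: algebra_simps)
  qed
  then have "Inf {dotp k cv z + M * v |z v. feas (\<lambda>s. \<theta> * y1 s + (1 - \<theta>) * y2 s) z v} \<le> dotp k cv z + M * v"
    using P_le unfolding Pv_def by blast
  also have "dotp k cv z + M * v = \<theta> * a + (1 - \<theta>) * b" unfolding a b z_def v_def dotp_lin by (simp add: algebra_simps)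
  finally show "Inf {dotp k cv z + M * v |z v. feas (\<lambda>s. \<theta> * y1 s + (1 - \<theta>) * y2 s) z v} \<le> \<theta> * a + (1 - \<theta>) * b" .
qed

end

lemma lagr_shift: "p1_lagr k cv As S M y' mu z v = p1_lagr k cv As S M y mu z v + (\<Sum>s<S. mu s * (y s - y' s))"
proof -
  have "(\<Sum>s<S. mu s * (dotp k (As s) z - y' s - v)) =
        (\<Sum>s<S. mu s * (dotp k (As s) z - y s - v) + mu s * (y s - y' s))"
    by (rule sum.cong) (simp_all add: algebra_simps)
  then show ?thesis unfolding p1_lagr_def by (simp add: sum.distrib)
qed

lemma lagr_split: "p1_lagr k cv As S M y mu z v =
   dotp k cv z + (\<Sum>s<S. mu s * (dotp k (As s) z - y s)) + (M - (\<Sum>s<S. mu s)) * v"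
proof -
  have "(\<Sum>s<S. mu s * (dotp k (As s) z - y s - v)) =
        (\<Sum>s<S. mu s * (dotp k (As s) z - y s) - mu s * v)"
    by (rule sum.cong) (simp_all add: algebra_simps)
  also have "\<dots> = (\<Sum>s<S. mu s * (dotp k (As s) z - y s)) - (\<Sum>s<S. mu s) * v"
    by (simp add: sum_subtractf sum_distrib_right)
  finally show ?thesis unfolding p1_lagr_def by (simp add: algebra_simps)
qed

context agent begin

lemma lagr_le_cost:
  assumes "feas y z v" "\<forall>s<S. 0 \<le> mu s"
  shows "p1_lagr k cv As S M y mu z v \<le> dotp k cv z + M * v"
proof -
  have "(\<Sum>s<S. mu s * (dotp k (As s) z - y s - v)) \<le> 0"
    using assms unfolding p1_feas_def by (intro sum_nonpos mult_nonneg_nonpos) auto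
  then show ?thesis unfolding p1_lagr_def by simp
qed

lemma dual_le_lagr:
  assumes "z \<in> convh X" "0 \<le> v"
  shows "p1_dualfun k cv As S X M y mu \<le> ereal (p1_lagr k cv As S M y mu z v)"
proof -
  have "(z, v) \<in> convh X \<times> {0..}" using assms by auto
  then show ?thesis unfolding p1_dualfun_def by (rule INF_lower2) simp
qed

lemma P_subgrad:
  assumes pd: "p1_pd_opt k cv As S X M y z v mu"
  shows "(\<forall>s<S. 0 \<le> mu s) \<and> (\<Sum>s<S. mu s) \<le> M \<and> (\<forall>y'. P y - (\<Sum>s<S. mu s * (y' s - y s)) \<le> P y')"
proof -
  have mu0: "\<forall>s<S. 0 \<le> mu s" and dopt: "\<And>mu'. (\<forall>s<S. 0 \<le> mu' s) \<Longrightarrow>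
      p1_dualfun k cv As S X M y mu' \<le> p1_dualfun k cv As S X M y mu"
    using pd unfolding p1_pd_opt_def by auto
  define \<psi> where "\<psi> u = P (\<lambda>s. y s + u s)" for u
  have cvx: "\<psi> (\<lambda>s. \<theta> * u s + (1 - \<theta>) * w s) \<le> \<theta> * \<psi> u + (1 - \<theta>) * \<psi> w"
    if "0 \<le> \<theta>" "\<theta> \<le> 1" for u w \<theta>
  proof -
    have "(\<lambda>s. y s + (\<theta> * u s + (1 - \<theta>) * w s)) = (\<lambda>s. \<theta> * (y s + u s) + (1 - \<theta>) * (y s + w s))"
      by (simp add: algebra_simps)
    then show ?thesis unfolding \<psi>_def using P_convex[OF that] by simp
  qed
  obtain g where g: "\<And>u. (\<forall>s\<ge>S. u s = 0) \<Longrightarrow> \<psi> (\<lambda>_. 0) + lin g S u \<le> \<psi> u"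
    using minorant[of \<psi> S, OF cvx] by blast
  have psi0: "\<psi> (\<lambda>_. 0) = P y" unfolding \<psi>_def by simp
  have gle: "g s \<le> 0" if s: "s < S" for s
  proof -
    define u where "u = (\<lambda>j. if j = s then 1 else (0::real))"
    have "lin g S u = g s" unfolding lin_def u_def using s by (simp add: if_distrib cong: if_cong)
    moreover have "\<psi> u \<le> \<psi> (\<lambda>_. 0)" unfolding \<psi>_def by (rule P_mono) (simp add: u_def)
    moreover have "\<forall>j\<ge>S. u j = 0" unfolding u_def using s by auto
    ultimately show ?thesis using g[of u] by simp
  qed
  define mu0' where "mu0' s = - g s" for s
  have D0: "ereal (P y) \<le> p1_dualfun k cv As S X M y mu0'"
    unfolding p1_dualfun_def
  proof (rule INF_greatest)
    fix zv assume "zv \<in> convh X \<times> {0::real..}"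
    then obtain z v where zv: "zv = (z, v)" "z \<in> convh X" "0 \<le> v" by auto
    define u where "u s = (if s < S then dotp k (As s) z - y s - v else 0)" for s
    have "feas (\<lambda>s. y s + u s) z v" unfolding p1_feas_def u_def using zv by auto
    then have "\<psi> u \<le> dotp k cv z + M * v" unfolding \<psi>_def by (rule P_le)
    moreover have "\<psi> (\<lambda>_. 0) + lin g S u \<le> \<psi> u" using g[of u] unfolding u_def by simp
    moreover have "lin g S u = - (\<Sum>s<S. mu0' s * (dotp k (As s) z - y s - v))"
      unfolding lin_def u_def mu0'_def by (simp add: sum_negf[symmetric])
    ultimately have "P y \<le> p1_lagr k cv As S M y mu0' z v" unfolding p1_lagr_def psi0 by simp
    then show "ereal (P y) \<le> ereal (p1_lagr k cv As S M y mu0' (fst zv) (snd zv))" using zv by simp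
  qed
  have Dmu: "ereal (P y) \<le> p1_dualfun k cv As S X M y mu"
    using D0 dopt[of mu0'] gle unfolding mu0'_def by force
  have sub: "P y - (\<Sum>s<S. mu s * (y' s - y s)) \<le> P y'" for y'
  proof -
    define c where "c = (\<Sum>s<S. mu s * (y s - y' s))"
    have c_eq: "P y - (\<Sum>s<S. mu s * (y' s - y s)) = P y + c"
      unfolding c_def by (simp add: algebra_simps sum_subtractf)
    have D': "p1_dualfun k cv As S X M y mu + ereal c \<le> p1_dualfun k cv As S X M y' mu"
      unfolding p1_dualfun_def
    proof (rule INF_greatest)
      fix zv assume zv: "zv \<in> convh X \<times> {0::real..}"
      have "(INF zv\<in>convh X \<times> {0..}. ereal (p1_lagr k cv As S M y mu (fst zv) (snd zv)))
            \<le> ereal (p1_lagr k cv As S M y mu (fst zv) (snd zv))" using zv by (rule INF_lower)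
      then have "(INF zv\<in>convh X \<times> {0..}. ereal (p1_lagr k cv As S M y mu (fst zv) (snd zv))) + ereal c
            \<le> ereal (p1_lagr k cv As S M y mu (fst zv) (snd zv)) + ereal c" by (rule add_right_mono)
      also have "\<dots> = ereal (p1_lagr k cv As S M y' mu (fst zv) (snd zv))"
        unfolding lagr_shift[of k cv As S M y' mu _ _ y] c_def by simp
      finally show "(INF zv\<in>convh X \<times> {0..}. ereal (p1_lagr k cv As S M y mu (fst zv) (snd zv))) + ereal c
            \<le> ereal (p1_lagr k cv As S M y' mu (fst zv) (snd zv))" .
    qed
    have "P y + c \<le> P y'"
    proof (rule P_ge)
      fix z v assume f: "feas y' z v"
      have "ereal (P y) + ereal c \<le> p1_dualfun k cv As S X M y mu + ereal c" using Dmu by (rule add_right_mono)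
      also have "\<dots> \<le> p1_dualfun k cv As S X M y' mu" by (rule D')
      also have "\<dots> \<le> ereal (p1_lagr k cv As S M y' mu z v)"
        using f unfolding p1_feas_def by (intro dual_le_lagr) auto
      also have "\<dots> \<le> ereal (dotp k cv z + M * v)" using lagr_le_cost[OF f mu0] by simp
      finally show "P y + c \<le> dotp k cv z + M * v" by simp
    qed
    then show ?thesis using c_eq by simp
  qed
  have musum: "(\<Sum>s<S. mu s) \<le> M"
  proof (rule ccontr)
    assume neg: "\<not> (\<Sum>s<S. mu s) \<le> M"
    obtain z0 where z0: "z0 \<in> X" using Xne by blast
    define K0 where "K0 = dotp k cv z0 + (\<Sum>s<S. mu s * (dotp k (As s) z0 - y s))"
    define v where "v = (\<bar>K0\<bar> + \<bar>P y\<bar> + 1) / ((\<Sum>s<S. mu s) - M)"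
    have v0: "0 \<le> v" unfolding v_def using neg by simp
    have "ereal (P y) \<le> ereal (p1_lagr k cv As S M y mu z0 v)"
      using Dmu dual_le_lagr[OF convh_base[OF z0] v0, of y mu] by (rule order.trans)
    then have "P y \<le> K0 + (M - (\<Sum>s<S. mu s)) * v" unfolding lagr_split K0_def by simp
    also have "(M - (\<Sum>s<S. mu s)) * v = - (\<bar>K0\<bar> + \<bar>P y\<bar> + 1)" unfolding v_def using neg by (simp add: field_simps)
    finally show False by linarith
  qed
  show ?thesis using mu0 musum sub by blast
qed

end

context agent begin

lemma P_attain: "\<exists>z v. feas y z v \<and> dotp k cv z + M * v = P y"
proof -
  obtain z0 where z0: "z0 \<in> X" using Xne by blast
  define v0 where "v0 = (\<Sum>s<S. \<bar>dotp k (As s) z0 - y s\<bar>)"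
  have f0: "feas y z0 v0"
  proof -
    have "\<forall>s<S. dotp k (As s) z0 \<le> y s + v0"
    proof (intro allI impI)
      fix s assume "s < S"
      then have "\<bar>dotp k (As s) z0 - y s\<bar> \<le> v0" unfolding v0_def by (intro member_le_sum) auto
      then show "dotp k (As s) z0 \<le> y s + v0" by linarith
    qed
    moreover have "0 \<le> v0" unfolding v0_def by (intro sum_nonneg) auto
    ultimately show ?thesis using convh_base[OF z0] unfolding p1_feas_def by blast
  qed
  have cz0: "Cm \<le> dotp k cv z0" using Cm[OF convh_base[OF z0]] .
  define Vm where "Vm = v0 + (dotp k cv z0 - Cm) / M"
  have v0Vm: "v0 \<le> Vm" unfolding Vm_def using cz0 Mpos by simp
  define Q where "Q = (TK k X \<times> {0..Vm}) \<inter> (\<Inter>s\<in>{..<S}. {p. dotp k (As s) (comb k (fst p)) \<le> y s + snd p})"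
  have cQ: "compact Q" unfolding Q_def
  proof (rule compact_Int_closed)
    show "compact (TK k X \<times> {0..Vm})" using compact_TK[OF Xc] by (intro compact_Times) auto
    show "closed (\<Inter>s\<in>{..<S}. {p. dotp k (As s) (comb k (fst p)) \<le> y s + snd p})"
    proof (intro closed_INT ballI closed_Collect_le)
      fix s
      show "continuous_on UNIV (\<lambda>p::(nat \<Rightarrow> real \<times> (nat \<Rightarrow> real)) \<times> real. dotp k (As s) (comb k (fst p)))"
        by (rule continuous_on_compose2[OF cont_dotp_comb continuous_on_fst[OF continuous_on_id]]) auto
      show "continuous_on UNIV (\<lambda>p::(nat \<Rightarrow> real \<times> (nat \<Rightarrow> real)) \<times> real. y s + snd p)"
        by (intro continuous_intros)
    qed
  qed
  obtain f0 where f0T: "f0 \<in> TK k X" "comb k f0 = z0"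
    using convh_rep[OF X0 Xne convh_base[OF z0]] by blast
  have inQ: "(f, v) \<in> Q" if "f \<in> TK k X" "0 \<le> v" "v \<le> Vm" "feas y (comb k f) v" for f v
    using that unfolding Q_def p1_feas_def by auto
  have Qne: "Q \<noteq> {}" using inQ[OF f0T(1)] f0 f0T(2) v0Vm unfolding p1_feas_def by force
  define obj where "obj p = dotp k cv (comb k (fst p)) + M * snd p" for p :: "(nat \<Rightarrow> real \<times> (nat \<Rightarrow> real)) \<times> real"
  have cobj: "continuous_on Q obj" unfolding obj_def
  proof (intro continuous_on_add continuous_on_mult continuous_on_const continuous_on_snd continuous_on_id)
    show "continuous_on Q (\<lambda>p. dotp k cv (comb k (fst p)))"
      by (rule continuous_on_compose2[OF cont_dotp_comb continuous_on_fst[OF continuous_on_id]]) auto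
  qed
  obtain p where p: "p \<in> Q" "\<forall>q\<in>Q. obj p \<le> obj q" using continuous_attains_inf[OF cQ Qne cobj] by blast
  define zb where "zb = comb k (fst p)"
  define vb where "vb = snd p"
  have fb: "feas y zb vb" using p(1) comb_in_convh unfolding Q_def zb_def vb_def p1_feas_def by auto
  have "obj p \<le> dotp k cv z + M * v" if f: "feas y z v" for z v
  proof (cases "v \<le> Vm")
    case True
    obtain fz where fz: "fz \<in> TK k X" "comb k fz = z" using convh_rep[OF X0 Xne] f unfolding p1_feas_def by blast
    have "(fz, v) \<in> Q" using inQ[OF fz(1)] True f fz(2) unfolding p1_feas_def by auto
    then show ?thesis using p(2) fz(2) unfolding obj_def by force
  next
    case False
    have "(f0, v0) \<in> Q" using inQ[OF f0T(1)] f0 f0T(2) v0Vm unfolding p1_feas_def by force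
    then have "obj p \<le> dotp k cv z0 + M * v0" using p(2) f0T(2) unfolding obj_def by force
    also have "\<dots> = Cm + M * Vm" unfolding Vm_def using Mpos by (simp add: field_simps)
    also have "\<dots> \<le> dotp k cv z + M * v"
    proof -
      have "Cm \<le> dotp k cv z" using Cm f unfolding p1_feas_def by blast
      moreover have "M * Vm \<le> M * v" using False Mpos by simp
      ultimately show ?thesis by simp
    qed
    finally show ?thesis .
  qed
  then have "obj p \<le> P y" by (intro P_ge)
  moreover have "P y \<le> obj p" using P_le[OF fb] unfolding obj_def zb_def vb_def by simp
  ultimately have "dotp k cv zb + M * vb = P y" unfolding obj_def zb_def vb_def by simp
  then show ?thesis using fb by blast
qed

end

definition antisym3 :: "(nat \<Rightarrow> nat \<Rightarrow> real) \<Rightarrow> bool" where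
  "antisym3 L \<longleftrightarrow> (\<forall>i j. L i j = - L j i)"

lemma path_flow:
  assumes nb: "\<forall>i<N. Nb i \<subseteq> {..<N} \<and> (\<forall>j\<in>Nb i. i \<in> Nb j)"
    and path: "(a, b) \<in> {(a, b). a < N \<and> b \<in> Nb a}\<^sup>*"
  shows "\<exists>L. antisym3 L \<and> (\<forall>i<N. (\<Sum>j\<in>Nb i. L i j) = (if i = a then w else 0) - (if i = b then w else 0))"
  using path
proof (induction rule: rtrancl_induct)
  case base
  show ?case by (rule exI[of _ "\<lambda>_ _. 0"]) (simp add: antisym3_def)
next
  case (step b' c)
  then obtain L where L: "antisym3 L" "\<forall>i<N. (\<Sum>j\<in>Nb i. L i j) = (if i = a then w else 0) - (if i = b' then w else 0)"
    by blast
  from step.hyps(2) have b'N: "b' < N" and cNb: "c \<in> Nb b'" by auto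
  have cN: "c < N" using nb b'N cNb by auto
  have b'Nb: "b' \<in> Nb c" using nb b'N cNb by auto
  have fin: "finite (Nb i)" if "i < N" for i using nb that finite_subset[of "Nb i" "{..<N}"] by auto
  show ?case
  proof (cases "b' = c")
    case True then show ?thesis using L by (metis diff_self)
  next
    case False
    define L2 where "L2 i j = (if i = b' \<and> j = c then w else if i = c \<and> j = b' then - w else 0)" for i j
    have a2: "antisym3 L2" unfolding antisym3_def L2_def using False by auto
    have n2: "(\<Sum>j\<in>Nb i. L2 i j) = (if i = b' then w else 0) - (if i = c then w else 0)" if i: "i < N" for i
    proof -
      consider "i = b'" | "i = c" | "i \<noteq> b' \<and> i \<noteq> c" by blast
      then show ?thesis
      proof cases
        case 1
        then have "(\<Sum>j\<in>Nb i. L2 i j) = (\<Sum>j\<in>Nb i. if j = c then w else 0)"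
          unfolding L2_def using False by (intro sum.cong) auto
        also have "\<dots> = w" using fin[OF i] cNb 1 by (simp add: sum.delta')
        finally show ?thesis using 1 False by simp
      next
        case 2
        then have "(\<Sum>j\<in>Nb i. L2 i j) = (\<Sum>j\<in>Nb i. if j = b' then - w else 0)"
          unfolding L2_def using False by (intro sum.cong) auto
        also have "\<dots> = - w" using fin[OF i] b'Nb 2 by (simp add: sum.delta')
        finally show ?thesis using 2 False by simp
      next
        case 3
        then have "(\<Sum>j\<in>Nb i. L2 i j) = 0" unfolding L2_def by (intro sum.neutral) auto
        then show ?thesis using 3 by simp
      qed
    qed
    define L3 where "L3 i j = L i j + L2 i j" for i j
    have "antisym3 L3" unfolding antisym3_def
    proof (intro allI)
      fix i j
      have "L i j = - L j i" "L2 i j = - L2 j i" using L(1) a2 unfolding antisym3_def by blast+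
      then show "L3 i j = - L3 j i" unfolding L3_def by linarith
    qed
    moreover have "\<forall>i<N. (\<Sum>j\<in>Nb i. L3 i j) = (if i = a then w else 0) - (if i = c then w else 0)"
      using L(2) n2 unfolding L3_def by (simp add: sum.distrib)
    ultimately show ?thesis by blast
  qed
qed

lemma flow_exists:
  assumes conn: "conn_undirected N Nb" and sum0: "(\<Sum>i<N. D i) = 0"
  shows "\<exists>L. antisym3 L \<and> (\<forall>i<N. (\<Sum>j\<in>Nb i. L i j) = D i)"
proof (cases "N = 0")
  case True then show ?thesis by (intro exI[of _ "\<lambda>_ _. 0"]) (simp add: antisym3_def)
next
  case False
  have nb: "\<forall>i<N. Nb i \<subseteq> {..<N} \<and> (\<forall>j\<in>Nb i. i \<in> Nb j)" using conn unfolding conn_undirected_def by blast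
  have "\<forall>a. \<exists>L. a < N \<longrightarrow> antisym3 L \<and> (\<forall>i<N. (\<Sum>j\<in>Nb i. L i j) = (if i = a then D a else 0) - (if i = 0 then D a else 0))"
  proof
    fix a show "\<exists>L. a < N \<longrightarrow> antisym3 L \<and> (\<forall>i<N. (\<Sum>j\<in>Nb i. L i j) = (if i = a then D a else 0) - (if i = 0 then D a else 0))"
    proof (cases "a < N")
      case True
      then have "(a, 0) \<in> {(a, b). a < N \<and> b \<in> Nb a}\<^sup>*" using conn False unfolding conn_undirected_def by auto
      from path_flow[OF nb this, of "D a"] show ?thesis by simp
    qed simp
  qed
  then have "\<exists>Lf. \<forall>a. a < N \<longrightarrow> antisym3 (Lf a) \<and>
     (\<forall>i<N. (\<Sum>j\<in>Nb i. Lf a i j) = (if i = a then D a else 0) - (if i = 0 then D a else 0))"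
    by (rule choice)
  then obtain Lf where Lf0: "\<forall>a. a < N \<longrightarrow> antisym3 (Lf a) \<and>
     (\<forall>i<N. (\<Sum>j\<in>Nb i. Lf a i j) = (if i = a then D a else 0) - (if i = 0 then D a else 0))" by blast
  have Lf: "antisym3 (Lf a) \<and>
     (\<forall>i<N. (\<Sum>j\<in>Nb i. Lf a i j) = (if i = a then D a else 0) - (if i = 0 then D a else 0))" if "a < N" for a
    using Lf0 that by blast
  define L where "L i j = (\<Sum>a<N. Lf a i j)" for i j
  have "antisym3 L" unfolding antisym3_def
  proof (intro allI)
    fix i j
    have "L i j = (\<Sum>a<N. - Lf a j i)" unfolding L_def
    proof (rule sum.cong)
      fix a assume "a \<in> {..<N}"
      then have "antisym3 (Lf a)" using Lf by blast
      then show "Lf a i j = - Lf a j i" unfolding antisym3_def by blast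
    qed simp
    also have "\<dots> = - L j i" unfolding L_def by (simp add: sum_negf)
    finally show "L i j = - L j i" .
  qed
  moreover have "(\<Sum>j\<in>Nb i. L i j) = D i" if i: "i < N" for i
  proof -
    have "(\<Sum>j\<in>Nb i. L i j) = (\<Sum>a<N. \<Sum>j\<in>Nb i. Lf a i j)" unfolding L_def by (rule sum.swap)
    also have "\<dots> = (\<Sum>a<N. (if i = a then D a else 0) - (if i = 0 then D a else 0))"
      using Lf i by (intro sum.cong) auto
    also have "\<dots> = D i - (if i = 0 then (\<Sum>a<N. D a) else 0)"
      using i by (simp add: sum_subtractf sum.delta)
    finally show ?thesis using sum0 by simp
  qed
  ultimately show ?thesis by blast
qed

lemma sum_swap_edges:
  fixes N :: nat
  assumes nb: "\<forall>i<N. Nb i \<subseteq> {..<N} \<and> (\<forall>j\<in>Nb i. i \<in> Nb j)"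
  shows "(\<Sum>i<N. \<Sum>j\<in>Nb i. h i j) = (\<Sum>i<N. \<Sum>j\<in>Nb i. (h j i :: real))"
proof -
  have fin: "\<forall>i\<in>{..<N}. finite (Nb i)"
  proof
    fix i assume "i \<in> {..<N}"
    then have "Nb i \<subseteq> {..<N}" using nb by auto
    then show "finite (Nb i)" by (rule finite_subset) (rule finite_lessThan)
  qed
  define E where "E = Sigma {..<N} Nb"
  have "(\<Sum>i<N. \<Sum>j\<in>Nb i. h i j) = (\<Sum>p\<in>E. h (fst p) (snd p))"
    unfolding E_def using fin by (simp add: sum.Sigma split_def)
  also have "\<dots> = (\<Sum>p\<in>E. h (snd p) (fst p))"
  proof -
    have sw: "prod.swap p \<in> E" if "p \<in> E" for p
    proof -
      obtain a b where ab: "p = (a, b)" "a < N" "b \<in> Nb a" using \<open>p \<in> E\<close> unfolding E_def by auto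
      have "Nb a \<subseteq> {..<N}" "a \<in> Nb b" using nb ab by auto
      then have "b < N" using ab(3) by auto
      then show ?thesis using ab \<open>a \<in> Nb b\<close> unfolding E_def by auto
    qed
    show ?thesis
      by (rule sum.reindex_bij_witness[of _ prod.swap prod.swap]) (auto simp: sw)
  qed
  also have "\<dots> = (\<Sum>i<N. \<Sum>j\<in>Nb i. h j i)"
    unfolding E_def using fin by (simp add: sum.Sigma split_def)
  finally show ?thesis .
qed

lemma nb_finite:
  fixes N :: nat
  assumes nb: "\<forall>i<N. Nb i \<subseteq> {..<N} \<and> (\<forall>j\<in>Nb i. i \<in> Nb j)" and "i < N"
  shows "finite (Nb i)"
proof -
  have "Nb i \<subseteq> {..<N}" using assms by auto
  then show "finite (Nb i)" by (rule finite_subset) (rule finite_lessThan)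
qed

lemma lyapunov:
  fixes N S :: nat and Nb :: "nat \<Rightarrow> nat set" and \<alpha> :: "nat \<Rightarrow> real"
    and y mu :: "nat \<Rightarrow> nat \<Rightarrow> nat \<Rightarrow> real" and Pf :: "nat \<Rightarrow> (nat \<Rightarrow> real) \<Rightarrow> real"
    and ystar :: "nat \<Rightarrow> nat \<Rightarrow> real"
  assumes conn: "conn_undirected N Nb" and aB: "assumptionB \<alpha>"
    and upd: "\<And>t i s. i < N \<Longrightarrow> s < S \<Longrightarrow> y (Suc t) i s = y t i s + \<alpha> t * (\<Sum>j\<in>Nb i. mu t i s - mu t j s)"
    and subg: "\<And>t i y'. i < N \<Longrightarrow> Pf i (y t i) - (\<Sum>s<S. mu t i s * (y' s - y t i s)) \<le> Pf i y'"
    and mub: "\<And>t i s. i < N \<Longrightarrow> s < S \<Longrightarrow> \<bar>mu t i s\<bar> \<le> Mb"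
    and ystar_sum: "\<And>s. s < S \<Longrightarrow> (\<Sum>i<N. ystar i s) = (\<Sum>i<N. y 0 i s)"
    and ystar_val: "(\<Sum>i<N. Pf i (ystar i)) \<le> J"
    and lowb: "\<And>t. J \<le> (\<Sum>i<N. Pf i (y t i))"
    and lim: "(\<lambda>t. \<Sum>i<N. Pf i (y t i)) \<longlonglongrightarrow> Finf"
  shows "Finf \<le> J"
proof -
  have nb: "\<forall>i<N. Nb i \<subseteq> {..<N} \<and> (\<forall>j\<in>Nb i. i \<in> Nb j)" using conn unfolding conn_undirected_def by blast
  have fin: "finite (Nb i)" if "i < N" for i using nb_finite[OF nb that] .
  have a0: "\<And>t. 0 \<le> \<alpha> t" and adiv: "filterlim (\<lambda>T. \<Sum>t<T. \<alpha> t) at_top sequentially"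
    and asq: "summable (\<lambda>t. (\<alpha> t)\<^sup>2)" using aB unfolding assumptionB_def by auto
  define F where "F t = (\<Sum>i<N. Pf i (y t i))" for t
  define \<Lambda> where "\<Lambda> t i j s = (\<Sum>\<tau><t. \<alpha> \<tau> * (mu \<tau> i s - mu \<tau> j s))" for t i j s
  have ylam: "y t i s = y 0 i s + (\<Sum>j\<in>Nb i. \<Lambda> t i j s)" if "i < N" "s < S" for t i s
  proof (induction t)
    case 0 then show ?case unfolding \<Lambda>_def by simp
  next
    case (Suc t)
    have "(\<Sum>j\<in>Nb i. \<Lambda> (Suc t) i j s) = (\<Sum>j\<in>Nb i. \<Lambda> t i j s) + \<alpha> t * (\<Sum>j\<in>Nb i. mu t i s - mu t j s)"
      unfolding \<Lambda>_def by (simp add: sum.distrib sum_distrib_left)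
    then show ?case using upd[OF that, of t] Suc by simp
  qed
  have "\<forall>s. \<exists>L. s < S \<longrightarrow> antisym3 L \<and> (\<forall>i<N. (\<Sum>j\<in>Nb i. L i j) = ystar i s - y 0 i s)"
  proof
    fix s show "\<exists>L. s < S \<longrightarrow> antisym3 L \<and> (\<forall>i<N. (\<Sum>j\<in>Nb i. L i j) = ystar i s - y 0 i s)"
    proof (cases "s < S")
      case True
      have "(\<Sum>i<N. ystar i s - y 0 i s) = 0" using ystar_sum[OF True] by (simp add: sum_subtractf)
      from flow_exists[OF conn this] show ?thesis by blast
    qed simp
  qed
  then have "\<exists>Ls. \<forall>s. s < S \<longrightarrow> antisym3 (Ls s) \<and> (\<forall>i<N. (\<Sum>j\<in>Nb i. Ls s i j) = ystar i s - y 0 i s)"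
    by (rule choice)
  then obtain Ls where Ls: "\<forall>s. s < S \<longrightarrow> antisym3 (Ls s) \<and> (\<forall>i<N. (\<Sum>j\<in>Nb i. Ls s i j) = ystar i s - y 0 i s)"
    by blast
  define \<Delta> where "\<Delta> t i j s = \<Lambda> t i j s - Ls s i j" for t i j s
  have Dsum: "(\<Sum>j\<in>Nb i. \<Delta> t i j s) = y t i s - ystar i s" if "i < N" "s < S" for t i s
  proof -
    have "(\<Sum>j\<in>Nb i. Ls s i j) = ystar i s - y 0 i s" using Ls that by blast
    then show ?thesis unfolding \<Delta>_def using ylam[OF that, of t] by (simp add: sum_subtractf)
  qed
  have Danti: "\<Delta> t j i s = - \<Delta> t i j s" if "s < S" for t i j s
  proof -
    have "antisym3 (Ls s)" using Ls that by blast
    then have "Ls s j i = - Ls s i j" unfolding antisym3_def by blast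
    moreover have "\<Lambda> t j i s = - \<Lambda> t i j s" unfolding \<Lambda>_def by (simp add: sum_negf[symmetric] algebra_simps)
    ultimately show ?thesis unfolding \<Delta>_def by simp
  qed
  have Dstep: "\<Delta> (Suc t) i j s = \<Delta> t i j s + \<alpha> t * (mu t i s - mu t j s)" for t i j s
    unfolding \<Delta>_def \<Lambda>_def by simp
  define V where "V t = (\<Sum>i<N. \<Sum>j\<in>Nb i. \<Sum>s<S. (\<Delta> t i j s)\<^sup>2)" for t
  define Gb where "Gb = (\<Sum>i<N. \<Sum>j\<in>Nb i. \<Sum>s<S. 4 * Mb\<^sup>2)"
  have Gb0: "0 \<le> Gb" unfolding Gb_def by (intro sum_nonneg) auto
  have V0: "0 \<le> V t" for t unfolding V_def by (intro sum_nonneg) auto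
  have Vstep: "V (Suc t) \<le> V t - 4 * \<alpha> t * (F t - J) + (\<alpha> t)\<^sup>2 * Gb" for t
  proof -
    define g where "g i j s = mu t i s - mu t j s" for i j s
    define A where "A = (\<Sum>i<N. \<Sum>j\<in>Nb i. \<Sum>s<S. mu t i s * \<Delta> t i j s)"
    define B where "B = (\<Sum>i<N. \<Sum>j\<in>Nb i. \<Sum>s<S. mu t j s * \<Delta> t i j s)"
    define C where "C = (\<Sum>i<N. \<Sum>j\<in>Nb i. \<Sum>s<S. g i j s * \<Delta> t i j s)"
    define G where "G = (\<Sum>i<N. \<Sum>j\<in>Nb i. \<Sum>s<S. (g i j s)\<^sup>2)"
    have sq: "(a + b * c)\<^sup>2 = a\<^sup>2 + 2 * b * (c * a) + b\<^sup>2 * c\<^sup>2" for a b c :: real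
      by (simp add: power2_eq_square algebra_simps)
    have VS: "V (Suc t) = V t + 2 * \<alpha> t * C + (\<alpha> t)\<^sup>2 * G"
    proof -
      have "V (Suc t) = (\<Sum>i<N. \<Sum>j\<in>Nb i. \<Sum>s<S. (\<Delta> t i j s)\<^sup>2 + 2 * \<alpha> t * (g i j s * \<Delta> t i j s) + (\<alpha> t)\<^sup>2 * (g i j s)\<^sup>2)"
        unfolding V_def Dstep g_def sq by (simp only: mult.assoc)
      also have "\<dots> = V t + 2 * \<alpha> t * C + (\<alpha> t)\<^sup>2 * G"
        unfolding V_def C_def G_def by (simp only: sum.distrib sum_distrib_left)
      finally show ?thesis .
    qed
    have CAB: "C = A - B" unfolding C_def A_def B_def g_def
      by (simp only: left_diff_distrib sum_subtractf)
    have "B = (\<Sum>i<N. \<Sum>j\<in>Nb i. \<Sum>s<S. mu t i s * \<Delta> t j i s)"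
      unfolding B_def by (rule sum_swap_edges[OF nb])
    also have "\<dots> = (\<Sum>i<N. \<Sum>j\<in>Nb i. \<Sum>s<S. - (mu t i s * \<Delta> t i j s))"
      apply (intro sum.cong refl)
      subgoal for i j s using Danti[of s t i j] by simp
      done
    also have "\<dots> = - A" unfolding A_def by (simp only: sum_negf)
    finally have BA: "B = - A" .
    have A_eq: "A = (\<Sum>i<N. \<Sum>s<S. mu t i s * (y t i s - ystar i s))"
    proof -
      have "A = (\<Sum>i<N. \<Sum>s<S. \<Sum>j\<in>Nb i. mu t i s * \<Delta> t i j s)"
        unfolding A_def by (rule sum.cong[OF refl]) (rule sum.swap)
      also have "\<dots> = (\<Sum>i<N. \<Sum>s<S. mu t i s * (\<Sum>j\<in>Nb i. \<Delta> t i j s))"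
        by (simp add: sum_distrib_left)
      also have "\<dots> = (\<Sum>i<N. \<Sum>s<S. mu t i s * (y t i s - ystar i s))"
        using Dsum by (intro sum.cong refl) auto
      finally show ?thesis .
    qed
    have "A \<le> (\<Sum>i<N. Pf i (ystar i) - Pf i (y t i))"
      unfolding A_eq
    proof (rule sum_mono)
      fix i assume "i \<in> {..<N}"
      then have "Pf i (y t i) - (\<Sum>s<S. mu t i s * (ystar i s - y t i s)) \<le> Pf i (ystar i)" using subg by blast
      moreover have "(\<Sum>s<S. mu t i s * (y t i s - ystar i s)) = - (\<Sum>s<S. mu t i s * (ystar i s - y t i s))"
        by (simp add: sum_negf[symmetric] algebra_simps)
      ultimately show "(\<Sum>s<S. mu t i s * (y t i s - ystar i s)) \<le> Pf i (ystar i) - Pf i (y t i)" by linarith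
    qed
    also have "\<dots> \<le> J - F t" unfolding F_def using ystar_val by (simp add: sum_subtractf)
    finally have AJ: "A \<le> J - F t" .
    have GG: "G \<le> Gb" unfolding G_def Gb_def
    proof (intro sum_mono)
      fix i j s assume "i \<in> {..<N}" "j \<in> Nb i" "s \<in> {..<S}"
      then have "i < N" "j < N" "s < S" using nb by auto
      then have "\<bar>mu t i s\<bar> \<le> Mb" "\<bar>mu t j s\<bar> \<le> Mb" using mub by auto
      moreover have "\<bar>mu t i s - mu t j s\<bar> \<le> \<bar>mu t i s\<bar> + \<bar>mu t j s\<bar>" by (rule abs_triangle_ineq4)
      ultimately have "\<bar>g i j s\<bar> \<le> 2 * Mb" unfolding g_def by linarith
      then have "\<bar>g i j s\<bar>\<^sup>2 \<le> (2 * Mb)\<^sup>2" by (intro power_mono) auto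
      then have "(g i j s)\<^sup>2 \<le> (2 * Mb)\<^sup>2" by simp
      then show "(g i j s)\<^sup>2 \<le> 4 * Mb\<^sup>2" by (simp add: power2_eq_square)
    qed
    have "2 * \<alpha> t * C = 4 * \<alpha> t * A" unfolding CAB BA by simp
    also have "\<dots> \<le> 4 * \<alpha> t * (J - F t)" using AJ a0[of t] by (intro mult_left_mono) auto
    finally have c1: "2 * \<alpha> t * C \<le> - 4 * \<alpha> t * (F t - J)" by (simp add: algebra_simps)
    have c2: "(\<alpha> t)\<^sup>2 * G \<le> (\<alpha> t)\<^sup>2 * Gb" using GG by (intro mult_left_mono) auto
    show ?thesis using VS c1 c2 by linarith
  qed
  define Bd where "Bd = V 0 + Gb * suminf (\<lambda>t. (\<alpha> t)\<^sup>2)"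
  have tele: "4 * (\<Sum>t<T. \<alpha> t * (F t - J)) \<le> V 0 - V T + Gb * (\<Sum>t<T. (\<alpha> t)\<^sup>2)" for T
  proof (induction T)
    case 0 then show ?case by simp
  next
    case (Suc T) then show ?case using Vstep[of T] by (simp add: algebra_simps)
  qed
  have bnd: "4 * (\<Sum>t<T. \<alpha> t * (F t - J)) \<le> Bd" for T
  proof -
    have "(\<Sum>t<T. (\<alpha> t)\<^sup>2) \<le> suminf (\<lambda>t. (\<alpha> t)\<^sup>2)" using asq by (intro sum_le_suminf) auto
    then have "Gb * (\<Sum>t<T. (\<alpha> t)\<^sup>2) \<le> Gb * suminf (\<lambda>t. (\<alpha> t)\<^sup>2)" using Gb0 by (intro mult_left_mono)
    then show ?thesis using tele[of T] V0[of T] unfolding Bd_def by linarith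
  qed
  show ?thesis
  proof (rule ccontr)
    assume "\<not> Finf \<le> J"
    define \<eta> where "\<eta> = (Finf - J) / 2"
    have eta: "\<eta> > 0" using \<open>\<not> Finf \<le> J\<close> unfolding \<eta>_def by simp
    have "eventually (\<lambda>t. J + \<eta> < F t) sequentially"
      using lim unfolding F_def by (rule order_tendstoD) (use eta \<eta>_def in simp)
    then obtain T0 where T0: "\<And>t. t \<ge> T0 \<Longrightarrow> J + \<eta> < F t" unfolding eventually_sequentially by blast
    define Z where "Z = Bd / (4 * \<eta>) + (\<Sum>t<T0. \<alpha> t) + 1"
    have "eventually (\<lambda>T. Z \<le> (\<Sum>t<T. \<alpha> t)) sequentially"
      using adiv unfolding filterlim_at_top by blast
    then obtain T1 where T1: "\<And>T. T \<ge> T1 \<Longrightarrow> Z \<le> (\<Sum>t<T. \<alpha> t)" unfolding eventually_sequentially by blast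
    define T where "T = max T0 T1"
    have TT0: "T0 \<le> T" and ZT: "Z \<le> (\<Sum>t<T. \<alpha> t)" using T1[of T] unfolding T_def by auto
    have split: "{..<T} = {..<T0} \<union> {T0..<T}" using TT0 by auto
    have "(\<Sum>t<T. \<alpha> t * (F t - J)) \<ge> (\<Sum>t\<in>{T0..<T}. \<alpha> t * (F t - J))"
    proof -
      have "(\<Sum>t<T. \<alpha> t * (F t - J)) = (\<Sum>t<T0. \<alpha> t * (F t - J)) + (\<Sum>t\<in>{T0..<T}. \<alpha> t * (F t - J))"
        unfolding split by (rule sum.union_disjoint) auto
      moreover have "0 \<le> (\<Sum>t<T0. \<alpha> t * (F t - J))"
        using a0 lowb unfolding F_def by (intro sum_nonneg mult_nonneg_nonneg) auto
      ultimately show ?thesis by simp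
    qed
    moreover have "(\<Sum>t\<in>{T0..<T}. \<alpha> t * (F t - J)) \<ge> (\<Sum>t\<in>{T0..<T}. \<alpha> t * \<eta>)"
    proof (intro sum_mono mult_left_mono)
      fix t assume "t \<in> {T0..<T}"
      then have "J + \<eta> < F t" using T0 by auto
      then show "\<eta> \<le> F t - J" by linarith
    qed (use a0 in auto)
    moreover have "(\<Sum>t\<in>{T0..<T}. \<alpha> t * \<eta>) = \<eta> * ((\<Sum>t<T. \<alpha> t) - (\<Sum>t<T0. \<alpha> t))"
    proof -
      have "(\<Sum>t<T. \<alpha> t) = (\<Sum>t<T0. \<alpha> t) + (\<Sum>t\<in>{T0..<T}. \<alpha> t)"
        unfolding split by (rule sum.union_disjoint) auto
      moreover have "(\<Sum>t\<in>{T0..<T}. \<alpha> t * \<eta>) = (\<Sum>t\<in>{T0..<T}. \<alpha> t) * \<eta>" by (rule sum_distrib_right[symmetric])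
      ultimately show ?thesis by (simp add: algebra_simps)
    qed
    moreover have "\<eta> * ((\<Sum>t<T. \<alpha> t) - (\<Sum>t<T0. \<alpha> t)) \<ge> \<eta> * (Bd / (4 * \<eta>) + 1)"
      using ZT eta unfolding Z_def by (intro mult_left_mono) auto
    moreover have "\<eta> * (Bd / (4 * \<eta>) + 1) = Bd / 4 + \<eta>" using eta by (simp add: field_simps)
    ultimately have "4 * (\<Sum>t<T. \<alpha> t * (F t - J)) \<ge> Bd + 4 * \<eta>" by linarith
    then show False using bnd[of T] eta by linarith
  qed
qed

lemma dotp_add_scale: "dotp k u (\<lambda>j. a j + t * d j) = dotp k u a + t * dotp k u d"
  unfolding dotp_def by (simp add: algebra_simps sum.distrib sum_distrib_left)

lemma mixing:
  fixes N S :: nat and n :: "nat \<Rightarrow> nat"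
  assumes opt: "lpr_opt N S n c A b r X zo"
    and zh: "\<forall>i<N. zh i \<in> convh (X i)" and zeta: "zeta N S n A b r zh > 0"
    and z: "\<forall>i<N. z i \<in> convh (X i)" and V0: "0 \<le> V"
    and cons: "\<forall>s<S. (\<Sum>i<N. dotp (n i) (A i s) (z i)) \<le> b s - r s + V"
  shows "(V + zeta N S n A b r zh) * (\<Sum>i<N. dotp (n i) (c i) (zo i))
         \<le> zeta N S n A b r zh * (\<Sum>i<N. dotp (n i) (c i) (z i)) + V * (\<Sum>i<N. dotp (n i) (c i) (zh i))"
proof -
  define \<zeta> where "\<zeta> = zeta N S n A b r zh"
  have zle: "\<zeta> \<le> b s - r s - (\<Sum>i<N. dotp (n i) (A i s) (zh i))" if "s < S" for s
    unfolding \<zeta>_def zeta_def using that by (intro Min_le) auto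
  define \<theta> where "\<theta> = V / (V + \<zeta>)"
  have ze: "\<zeta> > 0" using zeta unfolding \<zeta>_def .
  have th: "0 \<le> \<theta>" "\<theta> \<le> 1" unfolding \<theta>_def using ze V0 by auto
  have th2: "(1 - \<theta>) * V = \<theta> * \<zeta>" unfolding \<theta>_def using ze V0 by (simp add: field_simps)
  define z' where "z' i = (\<lambda>j. \<theta> * zh i j + (1 - \<theta>) * z i j)" for i
  have feas: "lpr_feas N S n A b r X z'"
    unfolding lpr_feas_def
  proof (intro conjI allI impI)
    fix i assume "i < N" then show "z' i \<in> convh (X i)" unfolding z'_def using zh z th by (intro convh_convex) auto
  next
    fix s assume s: "s < S"
    have "(\<Sum>i<N. dotp (n i) (A i s) (z' i)) = \<theta> * (\<Sum>i<N. dotp (n i) (A i s) (zh i)) + (1 - \<theta>) * (\<Sum>i<N. dotp (n i) (A i s) (z i))"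
      unfolding z'_def dotp_lin by (simp add: sum.distrib sum_distrib_left)
    also have "\<dots> \<le> \<theta> * (b s - r s - \<zeta>) + (1 - \<theta>) * (b s - r s + V)"
      using zle[OF s] cons s th by (intro add_mono mult_left_mono) auto
    also have "\<dots> = b s - r s" using th2 by (simp add: algebra_simps)
    finally show "(\<Sum>i<N. dotp (n i) (A i s) (z' i)) \<le> b s - r s" .
  qed
  have "(\<Sum>i<N. dotp (n i) (c i) (zo i)) \<le> (\<Sum>i<N. dotp (n i) (c i) (z' i))"
    using opt feas unfolding lpr_opt_def by blast
  also have "\<dots> = \<theta> * (\<Sum>i<N. dotp (n i) (c i) (zh i)) + (1 - \<theta>) * (\<Sum>i<N. dotp (n i) (c i) (z i))"
    unfolding z'_def dotp_lin by (simp add: sum.distrib sum_distrib_left)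
  finally have "(V + \<zeta>) * (\<Sum>i<N. dotp (n i) (c i) (zo i)) \<le> (V + \<zeta>) * (\<theta> * (\<Sum>i<N. dotp (n i) (c i) (zh i)) + (1 - \<theta>) * (\<Sum>i<N. dotp (n i) (c i) (z i)))"
    using ze V0 by (intro mult_left_mono) auto
  also have "\<dots> = ((V + \<zeta>) * \<theta>) * (\<Sum>i<N. dotp (n i) (c i) (zh i)) + ((V + \<zeta>) * (1 - \<theta>)) * (\<Sum>i<N. dotp (n i) (c i) (z i))"
    by (simp only: distrib_left mult.assoc)
  also have "(V + \<zeta>) * \<theta> = V" unfolding \<theta>_def using ze V0 by simp
  also have "(V + \<zeta>) * (1 - \<theta>) = \<zeta>" unfolding \<theta>_def using ze V0 by (simp add: field_simps)
  finally have "(V + \<zeta>) * (\<Sum>i<N. dotp (n i) (c i) (zo i)) \<le> \<zeta> * (\<Sum>i<N. dotp (n i) (c i) (z i)) + V * (\<Sum>i<N. dotp (n i) (c i) (zh i))"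
    by simp
  then show ?thesis unfolding \<zeta>_def .
qed

lemma direction:
  assumes z: "z \<in> convh X" and nz: "z \<notin> X"
  shows "\<exists>d. d \<noteq> (\<lambda>_. 0) \<and> (\<forall>t. \<bar>t\<bar> \<le> 1 \<longrightarrow> (\<lambda>j. z j + t * d j) \<in> convh X)"
proof -
  obtain F w where Fw: "finite F" "F \<subseteq> X" "\<forall>x\<in>F. 0 \<le> w x" "sum w F = 1" "z = (\<lambda>j. \<Sum>x\<in>F. w x * x j)"
    using z unfolding convh_def by blast
  obtain x0 where x0: "x0 \<in> F" "w x0 > 0"
  proof -
    have "\<exists>x\<in>F. w x > 0"
    proof (rule ccontr)
      assume "\<not> (\<exists>x\<in>F. w x > 0)"
      then have "sum w F \<le> 0" by (intro sum_nonpos) (auto simp: not_less)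
      then show False using Fw(4) by simp
    qed
    then show ?thesis using that by blast
  qed
  define w0 where "w0 = w x0"
  define F' where "F' = F - {x0}"
  have sumF: "(\<Sum>x\<in>F. g x) = g x0 + (\<Sum>x\<in>F'. g x)" for g :: "_ \<Rightarrow> real"
    unfolding F'_def using Fw(1) x0(1) by (simp add: sum.remove)
  have w1: "w0 < 1"
  proof (rule ccontr)
    assume "\<not> w0 < 1"
    moreover have "w0 \<le> sum w F" unfolding w0_def using Fw(1,3) x0(1) by (intro member_le_sum) auto
    ultimately have w01: "w0 = 1" using Fw(4) by simp
    then have "sum w F' = 0" using sumF[of w] Fw(4) unfolding w0_def by simp
    moreover have fF': "finite F'" unfolding F'_def using Fw(1) by simp
    moreover have "\<And>x. x \<in> F' \<Longrightarrow> 0 \<le> w x" using Fw(3) unfolding F'_def by simp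
    ultimately have wz: "\<forall>x\<in>F'. w x = 0" using sum_nonneg_eq_0_iff[of F' w] by blast
    have "z j = x0 j" for j
    proof -
      have "(\<Sum>x\<in>F'. w x * x j) = 0" using wz by simp
      then show ?thesis unfolding Fw(5) using sumF[of "\<lambda>x. w x * x j"] w01 unfolding w0_def by simp
    qed
    then have "z = x0" by auto
    then show False using nz x0(1) Fw(2) by auto
  qed
  define z' where "z' = (\<lambda>j. \<Sum>x\<in>F'. (w x / (1 - w0)) * x j)"
  have z'c: "z' \<in> convh X"
  proof -
    have "sum (\<lambda>x. w x / (1 - w0)) F' = 1"
      using sumF[of w] Fw(4) w1 unfolding w0_def by (simp add: sum_divide_distrib[symmetric])
    moreover have "finite F'" "F' \<subseteq> X" "\<forall>x\<in>F'. 0 \<le> w x / (1 - w0)" using Fw w1 unfolding F'_def by auto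
    ultimately show ?thesis unfolding convh_def z'_def
      by (intro CollectI exI[of _ F'] exI[of _ "\<lambda>x. w x / (1 - w0)"] conjI) (simp_all only: refl)
  qed
  have zeq: "z j = w0 * x0 j + (1 - w0) * z' j" for j
  proof -
    have "(1 - w0) * z' j = (\<Sum>x\<in>F'. w x * x j)" unfolding z'_def using w1
      by (simp add: sum_distrib_left)
    then show ?thesis unfolding Fw(5) using sumF[of "\<lambda>x. w x * x j"] unfolding w0_def by simp
  qed
  define t0 where "t0 = min w0 (1 - w0)"
  have t0: "t0 > 0" "t0 \<le> w0" "t0 \<le> 1 - w0" unfolding t0_def using x0 w1 unfolding w0_def by auto
  define d where "d = (\<lambda>j. t0 * (x0 j - z' j))"
  have "d \<noteq> (\<lambda>_. 0)"
  proof
    assume "d = (\<lambda>_. 0)"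
    then have "t0 * (x0 j - z' j) = 0" for j unfolding d_def by meson
    then have "x0 j = z' j" for j using t0(1) by simp
    then have "z = x0" using zeq by (auto simp: algebra_simps)
    then show False using nz x0(1) Fw(2) by auto
  qed
  moreover have "(\<lambda>j. z j + t * d j) \<in> convh X" if "\<bar>t\<bar> \<le> 1" for t
  proof -
    define \<theta> where "\<theta> = w0 + t * t0"
    have "\<bar>t * t0\<bar> \<le> t0" using that t0(1) by (simp add: abs_mult mult_le_cancel_right1)
    then have "t * t0 \<le> t0" "- t0 \<le> t * t0" by (simp_all add: abs_le_iff)
    then have th: "0 \<le> \<theta>" "\<theta> \<le> 1" unfolding \<theta>_def using t0 by linarith+
    have "(\<lambda>j. z j + t * d j) = (\<lambda>j. \<theta> * x0 j + (1 - \<theta>) * z' j)"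
      unfolding \<theta>_def d_def using zeq by (auto simp: algebra_simps)
    then show ?thesis using convh_convex[OF convh_base[of x0 X] z'c th] x0(1) Fw(2) by auto
  qed
  ultimately show ?thesis by blast
qed

lemma perturb_feas:
  fixes N S :: nat and n :: "nat \<Rightarrow> nat"
  assumes feas: "lpr_feas N S n A b r X zi" and I: "I \<subseteq> {..<N}"
    and dd: "\<And>i t. i \<in> I \<Longrightarrow> \<bar>t\<bar> \<le> 1 \<Longrightarrow> (\<lambda>j. zi i j + t * dd i j) \<in> convh (X i)"
    and tau: "\<And>i. i \<in> I \<Longrightarrow> \<bar>\<tau> i\<bar> \<le> 1"
    and bal: "\<And>s. s < S \<Longrightarrow> (\<Sum>i\<in>I. \<tau> i * dotp (n i) (A i s) (dd i)) = 0"
  defines "z' \<equiv> (\<lambda>i. if i \<in> I then (\<lambda>j. zi i j + \<tau> i * dd i j) else zi i)"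
  shows "lpr_feas N S n A b r X z'"
    and "(\<Sum>i<N. dotp (n i) (c i) (z' i)) = (\<Sum>i<N. dotp (n i) (c i) (zi i)) + (\<Sum>i\<in>I. \<tau> i * dotp (n i) (c i) (dd i))"
proof -
  have fI: "finite I" using finite_subset[OF I] by simp
  have gen: "(\<Sum>i<N. dotp (n i) (u i) (z' i)) = (\<Sum>i<N. dotp (n i) (u i) (zi i)) + (\<Sum>i\<in>I. \<tau> i * dotp (n i) (u i) (dd i))" for u
  proof -
    have "(\<Sum>i<N. dotp (n i) (u i) (z' i)) = (\<Sum>i<N. dotp (n i) (u i) (zi i) + (if i \<in> I then \<tau> i * dotp (n i) (u i) (dd i) else 0))"
      unfolding z'_def by (intro sum.cong refl) (simp add: dotp_add_scale)
    also have "\<dots> = (\<Sum>i<N. dotp (n i) (u i) (zi i)) + (\<Sum>i\<in>{..<N} \<inter> I. \<tau> i * dotp (n i) (u i) (dd i))"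
      by (simp add: sum.distrib sum.inter_restrict)
    also have "{..<N} \<inter> I = I" using I by auto
    finally show ?thesis .
  qed
  show "lpr_feas N S n A b r X z'" unfolding lpr_feas_def
  proof (intro conjI allI impI)
    fix i assume i: "i < N"
    show "z' i \<in> convh (X i)"
    proof (cases "i \<in> I")
      case True then show ?thesis unfolding z'_def using dd tau by simp
    next
      case False then show ?thesis unfolding z'_def using feas i unfolding lpr_feas_def by simp
    qed
  next
    fix s assume s: "s < S"
    have "(\<Sum>i<N. dotp (n i) (A i s) (z' i)) = (\<Sum>i<N. dotp (n i) (A i s) (zi i))"
      using gen[of "\<lambda>i. A i s"] bal[OF s] by simp
    then show "(\<Sum>i<N. dotp (n i) (A i s) (z' i)) \<le> b s - r s" using feas s unfolding lpr_feas_def by simp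
  qed
  show "(\<Sum>i<N. dotp (n i) (c i) (z' i)) = (\<Sum>i<N. dotp (n i) (c i) (zi i)) + (\<Sum>i\<in>I. \<tau> i * dotp (n i) (c i) (dd i))"
    by (rule gen)
qed

lemma card_bound:
  fixes N S :: nat and n :: "nat \<Rightarrow> nat"
  assumes uniq: "\<And>z'. lpr_opt N S n c A b r X z' \<Longrightarrow> \<forall>i<N. z' i = zu i"
    and opt: "lpr_opt N S n c A b r X zi"
  shows "card {i. i < N \<and> zi i \<notin> X i} \<le> S"
proof (rule ccontr)
  define I where "I = {i. i < N \<and> zi i \<notin> X i}"
  assume "\<not> card {i. i < N \<and> zi i \<notin> X i} \<le> S"
  then have cI: "card I > S" unfolding I_def by simp
  have IN: "I \<subseteq> {..<N}" unfolding I_def by auto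
  have fI: "finite I" using finite_subset[OF IN] by simp
  have feas: "lpr_feas N S n A b r X zi" using opt unfolding lpr_opt_def by blast
  have "\<forall>i. \<exists>d. i \<in> I \<longrightarrow> d \<noteq> (\<lambda>_. 0) \<and> (\<forall>t. \<bar>t\<bar> \<le> 1 \<longrightarrow> (\<lambda>j. zi i j + t * d j) \<in> convh (X i))"
  proof
    fix i show "\<exists>d. i \<in> I \<longrightarrow> d \<noteq> (\<lambda>_. 0) \<and> (\<forall>t. \<bar>t\<bar> \<le> 1 \<longrightarrow> (\<lambda>j. zi i j + t * d j) \<in> convh (X i))"
    proof (cases "i \<in> I")
      case True
      then have "zi i \<in> convh (X i)" "zi i \<notin> X i" using feas unfolding I_def lpr_feas_def by auto
      from direction[OF this] show ?thesis by blast
    qed simp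
  qed
  then have "\<exists>dd. \<forall>i. i \<in> I \<longrightarrow> dd i \<noteq> (\<lambda>_. 0) \<and> (\<forall>t. \<bar>t\<bar> \<le> 1 \<longrightarrow> (\<lambda>j. zi i j + t * dd i j) \<in> convh (X i))"
    by (rule choice)
  then obtain dd where dd0: "\<forall>i. i \<in> I \<longrightarrow> dd i \<noteq> (\<lambda>_. 0) \<and> (\<forall>t. \<bar>t\<bar> \<le> 1 \<longrightarrow> (\<lambda>j. zi i j + t * dd i j) \<in> convh (X i))"
    by blast
  have dd: "dd i \<noteq> (\<lambda>_. 0) \<and> (\<forall>t. \<bar>t\<bar> \<le> 1 \<longrightarrow> (\<lambda>j. zi i j + t * dd i j) \<in> convh (X i))" if "i \<in> I" for i
    using dd0 that by blast
  from lin_dep_exists[OF fI cI, of "\<lambda>i s. dotp (n i) (A i s) (dd i)"]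
  obtain l where "(\<exists>i\<in>I. l i \<noteq> 0) \<and> (\<forall>s<S. (\<Sum>i\<in>I. l i * dotp (n i) (A i s) (dd i)) = 0)" ..
  then have l: "\<exists>i\<in>I. l i \<noteq> 0" "\<forall>s<S. (\<Sum>i\<in>I. l i * dotp (n i) (A i s) (dd i)) = 0" by auto
  obtain i0 where i0: "i0 \<in> I" "l i0 \<noteq> 0" using l(1) by blast
  define K where "K = Max ((\<lambda>i. \<bar>l i\<bar>) ` I)"
  have Kge: "\<bar>l i\<bar> \<le> K" if "i \<in> I" for i unfolding K_def using fI that by (intro Max_ge) auto
  have Kpos: "K > 0" using Kge[OF i0(1)] i0(2) by simp
  define \<tau> where "\<tau> i = l i / K" for i
  have tau1: "\<bar>\<tau> i\<bar> \<le> 1" if "i \<in> I" for i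
  proof -
    have "\<bar>\<tau> i\<bar> = \<bar>l i\<bar> / K" unfolding \<tau>_def using Kpos by (simp add: abs_divide)
    also have "\<dots> \<le> 1" using Kge[OF that] Kpos by simp
    finally show ?thesis .
  qed
  have tau2: "\<bar>- \<tau> i\<bar> \<le> 1" if "i \<in> I" for i using tau1[OF that] by simp
  have bal1: "(\<Sum>i\<in>I. \<tau> i * dotp (n i) (A i s) (dd i)) = 0" if "s < S" for s
  proof -
    have "(\<Sum>i\<in>I. \<tau> i * dotp (n i) (A i s) (dd i)) = (\<Sum>i\<in>I. l i * dotp (n i) (A i s) (dd i)) / K"
      unfolding \<tau>_def by (simp add: sum_divide_distrib)
    then show ?thesis using l(2) that by simp
  qed
  have bal2: "(\<Sum>i\<in>I. (- \<tau> i) * dotp (n i) (A i s) (dd i)) = 0" if "s < S" for s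
    using bal1[OF that] by (simp add: sum_negf)
  have ddc: "(\<lambda>j. zi i j + t * dd i j) \<in> convh (X i)" if "i \<in> I" "\<bar>t\<bar> \<le> 1" for i t
  proof -
    have "\<forall>t. \<bar>t\<bar> \<le> 1 \<longrightarrow> (\<lambda>j. zi i j + t * dd i j) \<in> convh (X i)" using dd[OF that(1)] by (rule conjunct2)
    then show ?thesis using that(2) by blast
  qed
  define zp where "zp = (\<lambda>i. if i \<in> I then (\<lambda>j. zi i j + \<tau> i * dd i j) else zi i)"
  define zm where "zm = (\<lambda>i. if i \<in> I then (\<lambda>j. zi i j + (- \<tau> i) * dd i j) else zi i)"
  define Q where "Q = (\<Sum>i\<in>I. \<tau> i * dotp (n i) (c i) (dd i))"
  have P1a: "lpr_feas N S n A b r X zp"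
    using perturb_feas(1)[of N S n A b r X zi I dd \<tau>, OF feas IN ddc tau1 bal1] unfolding zp_def by simp
  have P1b: "(\<Sum>i<N. dotp (n i) (c i) (zp i)) = (\<Sum>i<N. dotp (n i) (c i) (zi i)) + Q"
    using perturb_feas(2)[of N S n A b r X zi I dd \<tau> c, OF feas IN ddc tau1 bal1] unfolding zp_def Q_def by simp
  have P2a: "lpr_feas N S n A b r X zm"
    using perturb_feas(1)[of N S n A b r X zi I dd "\<lambda>i. - \<tau> i", OF feas IN ddc tau2 bal2] unfolding zm_def by simp
  have P2b: "(\<Sum>i<N. dotp (n i) (c i) (zm i)) = (\<Sum>i<N. dotp (n i) (c i) (zi i)) + (\<Sum>i\<in>I. (- \<tau> i) * dotp (n i) (c i) (dd i))"
    using perturb_feas(2)[of N S n A b r X zi I dd "\<lambda>i. - \<tau> i" c, OF feas IN ddc tau2 bal2] unfolding zm_def by simp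
  note P1 = P1a P1b
  note P2 = P2a P2b
  have Q2: "(\<Sum>i\<in>I. (- \<tau> i) * dotp (n i) (c i) (dd i)) = - Q" unfolding Q_def by (simp add: sum_negf)
  have o1: "(\<Sum>i<N. dotp (n i) (c i) (zi i)) \<le> (\<Sum>i<N. dotp (n i) (c i) (zp i))" using opt P1(1) unfolding lpr_opt_def by blast
  have o2: "(\<Sum>i<N. dotp (n i) (c i) (zi i)) \<le> (\<Sum>i<N. dotp (n i) (c i) (zm i))" using opt P2(1) unfolding lpr_opt_def by blast
  have Q0: "Q = 0" using o1 o2 P1(2) P2(2) Q2 by linarith
  have "lpr_opt N S n c A b r X zp" unfolding lpr_opt_def
    using P1 Q0 opt unfolding lpr_opt_def by auto
  then have "zp i0 = zi i0" using uniq[of zp] uniq[OF opt] i0(1) IN by auto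
  then have "(\<lambda>j. zi i0 j + \<tau> i0 * dd i0 j) = zi i0" unfolding zp_def using i0(1) by simp
  then have "zi i0 j + \<tau> i0 * dd i0 j = zi i0 j" for j by (rule fun_cong[where x=j, THEN trans]) simp
  then have "\<tau> i0 * dd i0 j = 0" for j by simp
  moreover have "\<tau> i0 \<noteq> 0" unfolding \<tau>_def using i0(2) Kpos by simp
  ultimately have "dd i0 = (\<lambda>_. 0)" by auto
  then show False using dd[OF i0(1)] by blast
qed

theorem theorem2:
  fixes N S :: nat
    and n Zc mr :: "nat \<Rightarrow> nat"
    and D :: "nat \<Rightarrow> nat \<Rightarrow> nat \<Rightarrow> real" and d :: "nat \<Rightarrow> nat \<Rightarrow> real"
    and c :: "nat \<Rightarrow> nat \<Rightarrow> real" and A :: "nat \<Rightarrow> nat \<Rightarrow> nat \<Rightarrow> real" and b :: "nat \<Rightarrow> real"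
    and xL :: "nat \<Rightarrow> nat \<Rightarrow> real" and lL :: "nat \<Rightarrow> real"
  assumes N_pos: "1 \<le> N" and S_pos: "1 \<le> S"
    and Z_le: "\<forall>i<N. Zc i \<le> n i"
    and X_ne_compact: "\<forall>i<N. Xset (n i) (Zc i) (mr i) (D i) (d i) \<noteq> {} \<and>
                               compact (Xset (n i) (Zc i) (mr i) (D i) (d i))"
    and milp_feasible: "\<exists>x. milp_feas N S n A b (\<lambda>i. Xset (n i) (Zc i) (mr i) (D i) (d i)) x"
    and xL_optimal: "\<forall>i<N. xL_opt (n i) (A i) S (Xset (n i) (Zc i) (mr i) (D i) (d i)) (xL i) (lL i)"
    and assmA: "assumptionA N S n c A b
                  (\<lambda>s. sigma_asy N S n A (\<lambda>i. Xset (n i) (Zc i) (mr i) (D i) (d i)) xL)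
                  (\<lambda>i. Xset (n i) (Zc i) (mr i) (D i) (d i))"
    and assmC: "\<exists>zh. slater_point N S n A b
                  (\<lambda>s. sigma_asy N S n A (\<lambda>i. Xset (n i) (Zc i) (mr i) (D i) (d i)) xL)
                  (\<lambda>i. Xset (n i) (Zc i) (mr i) (D i) (d i)) zh"
  shows "\<exists>M0>0. \<forall>M\<ge>M0. \<forall>Nb \<alpha> y z v mu yinf xinf \<rho>inf \<xi>inf zinf zh.
    (let X = (\<lambda>i. Xset (n i) (Zc i) (mr i) (D i) (d i));
         \<sigma> = sigma_asy N S n A X xL;
         r = (\<lambda>s. \<sigma>)
     in conn_undirected N Nb \<and> assumptionB \<alpha> \<and>
        algo_run N S n c A b r X Nb M \<alpha> y z v mu \<and>
        (\<forall>i<N. \<forall>s<S. (\<lambda>t. y t i s) \<longlonglongrightarrow> yinf i s) \<and>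
        (\<forall>i<N. p3_lexopt (n i) (c i) (A i) S (X i) (yinf i) (xinf i) (\<rho>inf i) (\<xi>inf i)) \<and>
        (\<forall>i<N. sub_opt (n i) (c i) (A i) S (X i) (yinf i) (zinf i)) \<and>
        slater_point N S n A b r X zh
     \<longrightarrow> card {i. i < N \<and> zinf i \<notin> X i} \<le> S + 1 \<and>
         (\<Sum>i<N. dotp (n i) (c i) (xinf i)) - J_milp N S n c A b X
           \<le> (\<Sum>i\<in>{i. i < N \<and> zinf i \<notin> X i}.
                 dotp (n i) (c i) (xinf i) - pval (n i) (c i) (A i) S (X i) (yinf i))
             + \<sigma> / zeta N S n A b r zh *
               (\<Sum>i<N. dotp (n i) (c i) (zh i) - pval (n i) (c i) (A i) S (X i) (yinf i)))"
proof -
  define X where "X = (\<lambda>i. Xset (n i) (Zc i) (mr i) (D i) (d i))"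
  have Xfold: "Xset (n i) (Zc i) (mr i) (D i) (d i) = X i" for i unfolding X_def by simp
  define \<sigma> where "\<sigma> = sigma_asy N S n A X xL"
  define r where "r = (\<lambda>s::nat. \<sigma>)"
  note assms' = milp_feasible xL_optimal assmA assmC X_ne_compact
  have X0: "\<forall>x\<in>X i. \<forall>j\<ge>n i. x j = 0" for i unfolding X_def Xset_def by auto
  have Xne: "X i \<noteq> {}" and Xc: "compact (X i)" if "i < N" for i
    using X_ne_compact that unfolding Xfold by auto
  have ag: "agent (n i) (X i) M" if "i < N" "M > 0" for i M
    using X0[of i] Xne[OF that(1)] Xc[OF that(1)] that(2) by unfold_locales auto
  have "\<forall>i. \<exists>Cl. i < N \<longrightarrow> (\<forall>z\<in>convh (X i). Cl \<le> dotp (n i) (c i) z)"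
  proof
    fix i show "\<exists>Cl. i < N \<longrightarrow> (\<forall>z\<in>convh (X i). Cl \<le> dotp (n i) (c i) z)"
    proof (cases "i < N")
      case True
      obtain x where "x \<in> X i" "\<forall>y\<in>X i. dotp (n i) (c i) x \<le> dotp (n i) (c i) y"
        using continuous_attains_inf[OF Xc[OF True] Xne[OF True], of "dotp (n i) (c i)"]
          continuous_on_subset[OF cont_dotp] by blast
      then show ?thesis using dotp_convh_lower by blast
    qed simp
  qed
  then obtain Cl where Cl0: "\<forall>i. i < N \<longrightarrow> (\<forall>z\<in>convh (X i). Cl i \<le> dotp (n i) (c i) z)"
    by (metis (no_types))
  have Cl: "Cl i \<le> dotp (n i) (c i) z" if "i < N" "z \<in> convh (X i)" for i z using Cl0 that by blast
  obtain zh0 where zh0: "slater_point N S n A b r X zh0"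
    using assmC unfolding Xfold unfolding X_def[symmetric] \<sigma>_def[symmetric] r_def[symmetric] by blast
  obtain zo where zo: "lpr_opt N S n c A b r X zo" and uniq: "\<And>z'. lpr_opt N S n c A b r X z' \<Longrightarrow> \<forall>i<N. z' i = zo i"
    using assmA unfolding Xfold unfolding X_def[symmetric] \<sigma>_def[symmetric] r_def[symmetric] assumptionA_def by blast
  define \<zeta>0 where "\<zeta>0 = zeta N S n A b r zh0"
  have zh0c: "\<forall>i<N. zh0 i \<in> convh (X i)" and ze0: "\<zeta>0 > 0" using zh0 unfolding slater_point_def \<zeta>0_def by auto
  define Jr where "Jr = (\<Sum>i<N. dotp (n i) (c i) (zo i))"
  have zoc: "zo i \<in> convh (X i)" if "i < N" for i using zo that unfolding lpr_opt_def lpr_feas_def by auto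
  have JrCl: "(\<Sum>i<N. Cl i) \<le> Jr" unfolding Jr_def using Cl zoc by (intro sum_mono) auto
  define Bpen where "Bpen = max 0 ((\<Sum>i<N. dotp (n i) (c i) (zh0 i)) - (\<Sum>i<N. Cl i)) / \<zeta>0"
  have Bpen0: "0 \<le> Bpen" unfolding Bpen_def using ze0 by simp
  have pen: "Jr \<le> (\<Sum>i<N. dotp (n i) (c i) (z i)) + Bpen * V"
    if zc: "\<forall>i<N. z i \<in> convh (X i)" and V0: "0 \<le> V"
      and cons: "\<forall>s<S. (\<Sum>i<N. dotp (n i) (A i s) (z i)) \<le> b s - r s + V" for z V
  proof -
    have "(V + \<zeta>0) * Jr \<le> \<zeta>0 * (\<Sum>i<N. dotp (n i) (c i) (z i)) + V * (\<Sum>i<N. dotp (n i) (c i) (zh0 i))"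
      unfolding Jr_def \<zeta>0_def by (rule mixing[OF zo zh0c ze0[unfolded \<zeta>0_def] zc V0 cons])
    then have "\<zeta>0 * Jr \<le> \<zeta>0 * (\<Sum>i<N. dotp (n i) (c i) (z i)) + V * ((\<Sum>i<N. dotp (n i) (c i) (zh0 i)) - Jr)"
      by (simp add: algebra_simps)
    also have "V * ((\<Sum>i<N. dotp (n i) (c i) (zh0 i)) - Jr) \<le> V * (\<zeta>0 * Bpen)"
    proof (rule mult_left_mono[OF _ V0])
      have "(\<Sum>i<N. dotp (n i) (c i) (zh0 i)) - Jr \<le> max 0 ((\<Sum>i<N. dotp (n i) (c i) (zh0 i)) - (\<Sum>i<N. Cl i))"
        using JrCl by simp
      also have "\<dots> = \<zeta>0 * Bpen" unfolding Bpen_def using ze0 by simp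
      finally show "(\<Sum>i<N. dotp (n i) (c i) (zh0 i)) - Jr \<le> \<zeta>0 * Bpen" .
    qed
    finally have "\<zeta>0 * Jr \<le> \<zeta>0 * ((\<Sum>i<N. dotp (n i) (c i) (z i)) + Bpen * V)" by (simp add: algebra_simps)
    then show ?thesis using ze0 by simp
  qed
  show ?thesis
    unfolding Let_def Xfold unfolding X_def[symmetric] \<sigma>_def[symmetric] r_def[symmetric]
  proof (intro exI[of _ "Bpen + 1"] conjI allI impI)
    show "0 < Bpen + 1" using Bpen0 by simp
    fix M Nb \<alpha> y z v mu yinf xinf \<rho>inf \<xi>inf zinf zh
    assume M: "Bpen + 1 \<le> M"
    assume H: "conn_undirected N Nb \<and> assumptionB \<alpha> \<and>
        algo_run N S n c A b r X Nb M \<alpha> y z v mu \<and>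
        (\<forall>i<N. \<forall>s<S. (\<lambda>t. y t i s) \<longlonglongrightarrow> yinf i s) \<and>
        (\<forall>i<N. p3_lexopt (n i) (c i) (A i) S (X i) (yinf i) (xinf i) (\<rho>inf i) (\<xi>inf i)) \<and>
        (\<forall>i<N. sub_opt (n i) (c i) (A i) S (X i) (yinf i) (zinf i)) \<and>
        slater_point N S n A b r X zh"
    have conn: "conn_undirected N Nb" and aB: "assumptionB \<alpha>" and run: "algo_run N S n c A b r X Nb M \<alpha> y z v mu"
      and lim: "\<forall>i<N. \<forall>s<S. (\<lambda>t. y t i s) \<longlonglongrightarrow> yinf i s"
      and lex: "\<forall>i<N. p3_lexopt (n i) (c i) (A i) S (X i) (yinf i) (xinf i) (\<rho>inf i) (\<xi>inf i)"
      and sopt: "\<forall>i<N. sub_opt (n i) (c i) (A i) S (X i) (yinf i) (zinf i)"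
      and slz: "slater_point N S n A b r X zh" using H by blast+
    have Mpos: "M > 0" using M Bpen0 by simp
    have agM: "agent (n i) (X i) M" if "i < N" for i using ag[OF that Mpos] .
    define Pf where "Pf i = Pv (n i) (c i) (A i) S (X i) M" for i
    have nb: "\<forall>i<N. Nb i \<subseteq> {..<N} \<and> (\<forall>j\<in>Nb i. i \<in> Nb j)" using conn unfolding conn_undirected_def by blast
    have y0: "\<forall>s<S. (\<Sum>i<N. y 0 i s) = b s - r s"
      and pd: "\<forall>t. \<forall>i<N. p1_pd_opt (n i) (c i) (A i) S (X i) M (y t i) (z t i) (v t i) (mu t i)"
      and upd: "\<forall>t. \<forall>i<N. \<forall>s<S. y (Suc t) i s = y t i s + \<alpha> t * (\<Sum>j\<in>Nb i. mu t i s - mu t j s)"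
      using run unfolding algo_run_def by blast+
    have SG: "(\<forall>s<S. 0 \<le> mu t i s) \<and> (\<Sum>s<S. mu t i s) \<le> M \<and>
               (\<forall>y'. Pf i (y t i) - (\<Sum>s<S. mu t i s * (y' s - y t i s)) \<le> Pf i y')" if "i < N" for t i
      using agent.P_subgrad[OF agM[OF that], of "c i" "A i" S "y t i" "z t i" "v t i" "mu t i"] pd that
      unfolding Pf_def by blast
    have mub: "\<bar>mu t i s\<bar> \<le> M" if "i < N" "s < S" for t i s
    proof -
      have "0 \<le> mu t i s" using SG[OF that(1)] that(2) by blast
      moreover have "mu t i s \<le> (\<Sum>s<S. mu t i s)" using SG[OF that(1), of t] that(2)
        by (intro member_le_sum) auto
      ultimately show ?thesis using SG[OF that(1), of t] by simp
    qed
    have sumy: "(\<Sum>i<N. y t i s) = b s - \<sigma>" if s: "s < S" for t s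
    proof (induction t)
      case 0 then show ?case using y0 s unfolding r_def by simp
    next
      case (Suc t)
      have "(\<Sum>i<N. \<Sum>j\<in>Nb i. mu t i s - mu t j s) = (\<Sum>i<N. \<Sum>j\<in>Nb i. mu t i s) - (\<Sum>i<N. \<Sum>j\<in>Nb i. mu t j s)"
        by (simp add: sum_subtractf)
      also have "(\<Sum>i<N. \<Sum>j\<in>Nb i. mu t j s) = (\<Sum>i<N. \<Sum>j\<in>Nb i. mu t i s)"
        by (rule sum_swap_edges[OF nb])
      finally have z0: "(\<Sum>i<N. \<Sum>j\<in>Nb i. mu t i s - mu t j s) = 0" by simp
      have "(\<Sum>i<N. y (Suc t) i s) = (\<Sum>i<N. y t i s + \<alpha> t * (\<Sum>j\<in>Nb i. mu t i s - mu t j s))"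
        using upd s by (intro sum.cong) auto
      also have "\<dots> = (\<Sum>i<N. y t i s) + \<alpha> t * (\<Sum>i<N. \<Sum>j\<in>Nb i. mu t i s - mu t j s)"
        by (simp add: sum.distrib sum_distrib_left)
      finally show ?case using Suc z0 by simp
    qed
    have sumyinf: "(\<Sum>i<N. yinf i s) = b s - \<sigma>" if s: "s < S" for s
    proof -
      have "(\<lambda>t. \<Sum>i<N. y t i s) \<longlonglongrightarrow> (\<Sum>i<N. yinf i s)" using lim s by (intro tendsto_sum) auto
      moreover have "(\<lambda>t. \<Sum>i<N. y t i s) \<longlonglongrightarrow> b s - \<sigma>" using sumy[OF s] by simp
      ultimately show ?thesis by (rule LIMSEQ_unique)
    qed
    have penP: "Jr + (M - Bpen) * (\<Sum>i<N. vv i) \<le> (\<Sum>i<N. dotp (n i) (c i) (zz i) + M * vv i)"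
      if yy: "\<forall>s<S. (\<Sum>i<N. yy i s) = b s - \<sigma>"
        and f: "\<forall>i<N. p1_feas (n i) (A i) S (X i) (yy i) (zz i) (vv i)" for yy zz vv
    proof -
      define V where "V = (\<Sum>i<N. vv i)"
      have V0: "0 \<le> V" unfolding V_def using f unfolding p1_feas_def by (intro sum_nonneg) auto
      have zc: "\<forall>i<N. zz i \<in> convh (X i)" using f unfolding p1_feas_def by auto
      have cons: "\<forall>s<S. (\<Sum>i<N. dotp (n i) (A i s) (zz i)) \<le> b s - r s + V"
      proof (intro allI impI)
        fix s assume s: "s < S"
        have "(\<Sum>i<N. dotp (n i) (A i s) (zz i)) \<le> (\<Sum>i<N. yy i s + vv i)"
          using f s unfolding p1_feas_def by (intro sum_mono) auto
        also have "\<dots> = b s - r s + V" unfolding V_def r_def using yy s by (simp add: sum.distrib)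
        finally show "(\<Sum>i<N. dotp (n i) (A i s) (zz i)) \<le> b s - r s + V" .
      qed
      have "Jr \<le> (\<Sum>i<N. dotp (n i) (c i) (zz i)) + Bpen * V" by (rule pen[OF zc V0 cons])
      moreover have "(\<Sum>i<N. dotp (n i) (c i) (zz i) + M * vv i) = (\<Sum>i<N. dotp (n i) (c i) (zz i)) + M * V"
        unfolding V_def by (simp add: sum.distrib sum_distrib_left)
      moreover have "(M - Bpen) * V = M * V - Bpen * V" by (simp add: algebra_simps)
      ultimately show ?thesis unfolding V_def[symmetric] by linarith
    qed
    have attain: "\<exists>zz vv. \<forall>i<N. p1_feas (n i) (A i) S (X i) (yy i) (zz i) (vv i) \<and>
                     dotp (n i) (c i) (zz i) + M * vv i = Pf i (yy i)" for yy
    proof -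
      have "\<forall>i. \<exists>p. i < N \<longrightarrow> p1_feas (n i) (A i) S (X i) (yy i) (fst p) (snd p) \<and>
                     dotp (n i) (c i) (fst p) + M * snd p = Pf i (yy i)"
      proof
        fix i show "\<exists>p. i < N \<longrightarrow> p1_feas (n i) (A i) S (X i) (yy i) (fst p) (snd p) \<and>
                     dotp (n i) (c i) (fst p) + M * snd p = Pf i (yy i)"
        proof (cases "i < N")
          case True
          from agent.P_attain[OF agM[OF True], where cv="c i" and As="A i" and S=S and y="yy i"] obtain zq vq where
            "p1_feas (n i) (A i) S (X i) (yy i) zq vq \<and> dotp (n i) (c i) zq + M * vq = Pf i (yy i)"
            unfolding Pf_def by blast
          then show ?thesis by (intro exI[of _ "(zq, vq)"]) simp
        qed simp
      qed
      then obtain p where "\<forall>i. i < N \<longrightarrow> p1_feas (n i) (A i) S (X i) (yy i) (fst (p i)) (snd (p i)) \<and>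
                     dotp (n i) (c i) (fst (p i)) + M * snd (p i) = Pf i (yy i)" by metis
      then show ?thesis by (intro exI[of _ "\<lambda>i. fst (p i)"] exI[of _ "\<lambda>i. snd (p i)"]) blast
    qed
    have lowb: "Jr \<le> (\<Sum>i<N. Pf i (yy i))" if yy: "\<forall>s<S. (\<Sum>i<N. yy i s) = b s - \<sigma>" for yy
    proof -
      obtain zz vv where zv: "\<forall>i<N. p1_feas (n i) (A i) S (X i) (yy i) (zz i) (vv i) \<and>
                     dotp (n i) (c i) (zz i) + M * vv i = Pf i (yy i)" using attain by blast
      have "Jr + (M - Bpen) * (\<Sum>i<N. vv i) \<le> (\<Sum>i<N. dotp (n i) (c i) (zz i) + M * vv i)"
        using penP[OF yy] zv by blast
      also have "\<dots> = (\<Sum>i<N. Pf i (yy i))" using zv by (intro sum.cong) auto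
      finally have A: "Jr + (M - Bpen) * (\<Sum>i<N. vv i) \<le> (\<Sum>i<N. Pf i (yy i))" .
      have "0 \<le> (M - Bpen) * (\<Sum>i<N. vv i)" using M zv unfolding p1_feas_def
        by (intro mult_nonneg_nonneg sum_nonneg) auto
      then show ?thesis using A by linarith
    qed
    have conv: "(\<lambda>t. \<Sum>i<N. Pf i (y t i)) \<longlonglongrightarrow> (\<Sum>i<N. Pf i (yinf i))"
    proof (rule tendsto_sum)
      fix i assume "i \<in> {..<N}"
      then have i: "i < N" by simp
      define g where "g t = M * (\<Sum>s<S. \<bar>y t i s - yinf i s\<bar>)" for t
      have gl: "g \<longlonglongrightarrow> M * (\<Sum>s<S. \<bar>yinf i s - yinf i s\<bar>)" unfolding g_def
        using lim i by (intro tendsto_mult tendsto_const tendsto_sum tendsto_rabs tendsto_diff) auto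
      then have g0: "g \<longlonglongrightarrow> 0" by simp
      have "\<forall>t. norm (Pf i (y t i) - Pf i (yinf i)) \<le> g t"
      proof
        fix t
        have "Pf i (y t i) \<le> Pf i (yinf i) + M * (\<Sum>s<S. \<bar>yinf i s - y t i s\<bar>)"
          using agent.P_lip[OF agM[OF i]] unfolding Pf_def by blast
        moreover have "Pf i (yinf i) \<le> Pf i (y t i) + M * (\<Sum>s<S. \<bar>y t i s - yinf i s\<bar>)"
          using agent.P_lip[OF agM[OF i]] unfolding Pf_def by blast
        moreover have "(\<Sum>s<S. \<bar>yinf i s - y t i s\<bar>) = (\<Sum>s<S. \<bar>y t i s - yinf i s\<bar>)"
          by (simp add: abs_minus_commute)
        ultimately show "norm (Pf i (y t i) - Pf i (yinf i)) \<le> g t" unfolding g_def by auto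
      qed
      then have "(\<lambda>t. Pf i (y t i) - Pf i (yinf i)) \<longlonglongrightarrow> 0"
        by (intro Lim_null_comparison[OF _ g0]) simp
      then have "(\<lambda>t. (Pf i (y t i) - Pf i (yinf i)) + Pf i (yinf i)) \<longlonglongrightarrow> 0 + Pf i (yinf i)"
        by (intro tendsto_add tendsto_const)
      then show "(\<lambda>t. Pf i (y t i)) \<longlonglongrightarrow> Pf i (yinf i)" by simp
    qed
    have zofeas: "\<forall>s<S. (\<Sum>i<N. dotp (n i) (A i s) (zo i)) \<le> b s - \<sigma>"
      using zo unfolding lpr_opt_def lpr_feas_def r_def by blast
    define ystar where "ystar i s = dotp (n i) (A i s) (zo i) +
        (if i = 0 then b s - \<sigma> - (\<Sum>i'<N. dotp (n i') (A i' s) (zo i')) else 0)" for i s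
    have ys_sum: "(\<Sum>i<N. ystar i s) = (\<Sum>i<N. y 0 i s)" if s: "s < S" for s
    proof -
      have "(\<Sum>i<N. ystar i s) = (\<Sum>i<N. dotp (n i) (A i s) (zo i)) +
             (\<Sum>i<N. if i = 0 then b s - \<sigma> - (\<Sum>i'<N. dotp (n i') (A i' s) (zo i')) else 0)"
        unfolding ystar_def by (simp add: sum.distrib)
      also have "(\<Sum>i<N. if i = 0 then b s - \<sigma> - (\<Sum>i'<N. dotp (n i') (A i' s) (zo i')) else 0)
                 = b s - \<sigma> - (\<Sum>i'<N. dotp (n i') (A i' s) (zo i'))"
        using N_pos by (simp add: sum.delta)
      finally show ?thesis using sumy[OF s, of 0] by simp
    qed
    have ys_val: "(\<Sum>i<N. Pf i (ystar i)) \<le> Jr" unfolding Jr_def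
    proof (rule sum_mono)
      fix i assume "i \<in> {..<N}"
      then have i: "i < N" by simp
      have "p1_feas (n i) (A i) S (X i) (ystar i) (zo i) 0" unfolding p1_feas_def
      proof (intro conjI allI impI)
        show "zo i \<in> convh (X i)" using zoc[OF i] .
      next
        fix s assume s: "s < S"
        then show "dotp (n i) (A i s) (zo i) \<le> ystar i s + 0" unfolding ystar_def using zofeas by auto
      qed simp
      then show "Pf i (ystar i) \<le> dotp (n i) (c i) (zo i)"
        using agent.P_le[OF agM[OF i]] unfolding Pf_def by fastforce
    qed
    have PinfJ: "(\<Sum>i<N. Pf i (yinf i)) \<le> Jr"
    proof (rule lyapunov[OF conn aB, where y=y and mu=mu and Pf=Pf and ystar=ystar and Mb=M])
      show "\<And>t i s. i < N \<Longrightarrow> s < S \<Longrightarrow> y (Suc t) i s = y t i s + \<alpha> t * (\<Sum>j\<in>Nb i. mu t i s - mu t j s)"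
        using upd by blast
      show "\<And>t i y'. i < N \<Longrightarrow> Pf i (y t i) - (\<Sum>s<S. mu t i s * (y' s - y t i s)) \<le> Pf i y'"
        using SG by blast
      show "\<And>t i s. i < N \<Longrightarrow> s < S \<Longrightarrow> \<bar>mu t i s\<bar> \<le> M" by (rule mub)
      show "\<And>s. s < S \<Longrightarrow> (\<Sum>i<N. ystar i s) = (\<Sum>i<N. y 0 i s)" by (rule ys_sum)
      show "(\<Sum>i<N. Pf i (ystar i)) \<le> Jr" by (rule ys_val)
      fix t
      have "\<forall>s<S. (\<Sum>i<N. y t i s) = b s - \<sigma>" using sumy by blast
      then show "Jr \<le> (\<Sum>i<N. Pf i (y t i))" by (rule lowb)
      show "(\<lambda>t. \<Sum>i<N. Pf i (y t i)) \<longlonglongrightarrow> (\<Sum>i<N. Pf i (yinf i))" by (rule conv)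
    qed
    obtain zz vv where zv: "\<forall>i<N. p1_feas (n i) (A i) S (X i) (yinf i) (zz i) (vv i) \<and>
                     dotp (n i) (c i) (zz i) + M * vv i = Pf i (yinf i)" using attain by blast
    have yinfs: "\<forall>s<S. (\<Sum>i<N. yinf i s) = b s - \<sigma>" using sumyinf by blast
    have "Jr + (M - Bpen) * (\<Sum>i<N. vv i) \<le> (\<Sum>i<N. dotp (n i) (c i) (zz i) + M * vv i)"
      using penP[OF yinfs] zv by blast
    also have "\<dots> = (\<Sum>i<N. Pf i (yinf i))" using zv by (intro sum.cong) auto
    finally have "(M - Bpen) * (\<Sum>i<N. vv i) \<le> 0" using PinfJ by linarith
    moreover have vv0: "\<forall>i<N. 0 \<le> vv i" using zv unfolding p1_feas_def by blast
    moreover have V0: "0 \<le> (\<Sum>i<N. vv i)" using vv0 by (intro sum_nonneg) auto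
    moreover have "1 * (\<Sum>i<N. vv i) \<le> (M - Bpen) * (\<Sum>i<N. vv i)"
      using M V0 by (intro mult_right_mono) auto
    ultimately have "(\<Sum>i<N. vv i) = 0" by linarith
    moreover have "\<And>i. i \<in> {..<N} \<Longrightarrow> 0 \<le> vv i" using vv0 by simp
    ultimately have vvz: "\<forall>i<N. vv i = 0" using sum_nonneg_eq_0_iff[of "{..<N}" vv] by simp
    have zsub: "sub_feas (n i) (A i) S (X i) (yinf i) (zz i)" if i: "i < N" for i
      using zv vvz i unfolding p1_feas_def sub_feas_def by auto
    have zinf_le: "dotp (n i) (c i) (zinf i) \<le> dotp (n i) (c i) (zz i)" if i: "i < N" for i
      using sopt zsub[OF i] i unfolding sub_opt_def by blast
    have sumzinf: "(\<Sum>i<N. dotp (n i) (c i) (zinf i)) \<le> Jr"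
    proof -
      have "(\<Sum>i<N. dotp (n i) (c i) (zinf i)) \<le> (\<Sum>i<N. dotp (n i) (c i) (zz i))"
        using zinf_le by (intro sum_mono) auto
      also have "\<dots> = (\<Sum>i<N. Pf i (yinf i))" using zv vvz by (intro sum.cong) auto
      finally show ?thesis using PinfJ by linarith
    qed
    have zinf_feas: "lpr_feas N S n A b r X zinf" unfolding lpr_feas_def
    proof (intro conjI allI impI)
      fix i assume "i < N" then show "zinf i \<in> convh (X i)" using sopt unfolding sub_opt_def sub_feas_def by blast
    next
      fix s assume s: "s < S"
      have "(\<Sum>i<N. dotp (n i) (A i s) (zinf i)) \<le> (\<Sum>i<N. yinf i s)"
        using sopt s unfolding sub_opt_def sub_feas_def by (intro sum_mono) auto
      then show "(\<Sum>i<N. dotp (n i) (A i s) (zinf i)) \<le> b s - r s" using sumyinf[OF s] unfolding r_def by simp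
    qed
    have Jr_le: "Jr \<le> (\<Sum>i<N. dotp (n i) (c i) (zinf i))" using zo zinf_feas unfolding lpr_opt_def Jr_def by blast
    have zinf_opt: "lpr_opt N S n c A b r X zinf" unfolding lpr_opt_def
    proof (intro conjI allI impI)
      show "lpr_feas N S n A b r X zinf" by (rule zinf_feas)
    next
      fix z' assume "lpr_feas N S n A b r X z'"
      then have "Jr \<le> (\<Sum>i<N. dotp (n i) (c i) (z' i))" using zo unfolding lpr_opt_def Jr_def by blast
      then show "(\<Sum>i<N. dotp (n i) (c i) (zinf i)) \<le> (\<Sum>i<N. dotp (n i) (c i) (z' i))" using sumzinf by linarith
    qed
    have cardS: "card {i. i < N \<and> zinf i \<notin> X i} \<le> S" by (rule card_bound[OF uniq zinf_opt])
    show "card {i. i < N \<and> zinf i \<notin> X i} \<le> S + 1" using cardS by simp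
    have pv: "pval (n i) (c i) (A i) S (X i) (yinf i) = dotp (n i) (c i) (zinf i)" if i: "i < N" for i
      unfolding pval_def
    proof (rule cInf_eq_minimum)
      show "dotp (n i) (c i) (zinf i) \<in> {dotp (n i) (c i) z |z. sub_feas (n i) (A i) S (X i) (yinf i) z}"
        using sopt i unfolding sub_opt_def by blast
      fix w assume "w \<in> {dotp (n i) (c i) z |z. sub_feas (n i) (A i) S (X i) (yinf i) z}"
      then show "dotp (n i) (c i) (zinf i) \<le> w" using sopt i unfolding sub_opt_def by blast
    qed
    have xle: "dotp (n i) (c i) (xinf i) \<le> dotp (n i) (c i) (zinf i)" if i: "i < N" and zX: "zinf i \<in> X i" for i
    proof -
      have lx: "p3_lexopt (n i) (c i) (A i) S (X i) (yinf i) (xinf i) (\<rho>inf i) (\<xi>inf i)" using lex i by blast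
      have sf: "sub_feas (n i) (A i) S (X i) (yinf i) (zinf i)" using sopt i unfolding sub_opt_def by blast
      have f0: "p3_feas (n i) (c i) (A i) S (X i) (yinf i) (zinf i) 0 (dotp (n i) (c i) (zinf i))"
        using zX sf unfolding p3_feas_def sub_feas_def by auto
      have "\<rho>inf i \<le> 0" using lx f0 unfolding p3_lexopt_def by blast
      moreover have "0 \<le> \<rho>inf i" using lx unfolding p3_lexopt_def p3_feas_def by blast
      ultimately have "\<rho>inf i = 0" by simp
      then have f0': "p3_feas (n i) (c i) (A i) S (X i) (yinf i) (zinf i) (\<rho>inf i) (dotp (n i) (c i) (zinf i))"
        using f0 by simp
      have "\<forall>x' \<xi>'. p3_feas (n i) (c i) (A i) S (X i) (yinf i) x' (\<rho>inf i) \<xi>' \<longrightarrow> \<xi>inf i \<le> \<xi>'"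
        using lx unfolding p3_lexopt_def by blast
      then have "\<xi>inf i \<le> dotp (n i) (c i) (zinf i)" using f0' by blast
      moreover have "dotp (n i) (c i) (xinf i) \<le> \<xi>inf i" using lx unfolding p3_lexopt_def p3_feas_def by blast
      ultimately show ?thesis by simp
    qed
    have \<sigma>0: "0 \<le> \<sigma>"
    proof -
      have xL0: "xL_opt (n 0) (A 0) S (X 0) (xL 0) (lL 0)" using xL_optimal N_pos unfolding Xfold by auto
      then have xLX: "xL 0 \<in> X 0" unfolding xL_opt_def by blast
      obtain x where "x \<in> X 0" "\<forall>w\<in>X 0. dotp (n 0) (A 0 0) x \<le> dotp (n 0) (A 0 0) w"
        using continuous_attains_inf[OF Xc Xne, of 0 "dotp (n 0) (A 0 0)"] N_pos
          continuous_on_subset[OF cont_dotp] by auto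
      then have bdd: "bdd_below {dotp (n 0) (A 0 0) w | w. w \<in> X 0}" unfolding bdd_below_def by blast
      have "Lmin (n 0) (A 0) (X 0) 0 \<le> dotp (n 0) (A 0 0) (xL 0)"
        unfolding Lmin_def by (rule cInf_lower[OF _ bdd]) (use xLX in blast)
      then have t0: "0 \<le> dotp (n 0) (A 0 0) (xL 0) - Lmin (n 0) (A 0) (X 0) 0" by simp
      define f where "f = (\<lambda>(i, s). dotp (n i) (A i s) (xL i) - Lmin (n i) (A i) (X i) s)"
      have "f (0, 0) \<le> Max (f ` ({..<N} \<times> {..<S}))" using N_pos S_pos by (intro Max_ge) auto
      then have "0 \<le> Max (f ` ({..<N} \<times> {..<S}))" using t0 unfolding f_def by simp
      then show ?thesis unfolding \<sigma>_def sigma_asy_def f_def by simp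
    qed
    define \<zeta> where "\<zeta> = zeta N S n A b r zh"
    have zhc: "\<forall>i<N. zh i \<in> convh (X i)" and ze: "\<zeta> > 0" using slz unfolding slater_point_def \<zeta>_def by auto
    define q where "q = \<sigma> / \<zeta>"
    define Jm where "Jm = J_milp N S n c A b X"
    have Jmilp: "(1 + q) * Jr - q * (\<Sum>i<N. dotp (n i) (c i) (zh i)) \<le> Jm"
    proof -
      have key: "(1 + q) * Jr - q * (\<Sum>i<N. dotp (n i) (c i) (zh i)) \<le> (\<Sum>i<N. dotp (n i) (c i) (x i))"
        if mf: "milp_feas N S n A b X x" for x
      proof -
        have xc: "\<forall>i<N. x i \<in> convh (X i)" using mf convh_base unfolding milp_feas_def by blast
        have cons: "\<forall>s<S. (\<Sum>i<N. dotp (n i) (A i s) (x i)) \<le> b s - r s + \<sigma>"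
          using mf unfolding milp_feas_def r_def by simp
        have "(\<sigma> + \<zeta>) * Jr \<le> \<zeta> * (\<Sum>i<N. dotp (n i) (c i) (x i)) + \<sigma> * (\<Sum>i<N. dotp (n i) (c i) (zh i))"
          unfolding \<zeta>_def Jr_def by (rule mixing[OF zo zhc ze[unfolded \<zeta>_def] xc \<sigma>0 cons])
        then have "((\<sigma> + \<zeta>) * Jr - \<sigma> * (\<Sum>i<N. dotp (n i) (c i) (zh i))) / \<zeta> \<le> (\<Sum>i<N. dotp (n i) (c i) (x i))"
          using ze by (simp add: pos_divide_le_eq algebra_simps)
        moreover have "((\<sigma> + \<zeta>) * Jr - \<sigma> * (\<Sum>i<N. dotp (n i) (c i) (zh i))) / \<zeta>
             = (1 + q) * Jr - q * (\<Sum>i<N. dotp (n i) (c i) (zh i))" unfolding q_def using ze by (simp add: field_simps)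
        ultimately show ?thesis by simp
      qed
      have ne: "{(\<Sum>i<N. dotp (n i) (c i) (x i)) | x. milp_feas N S n A b X x} \<noteq> {}"
        using milp_feasible unfolding Xfold unfolding X_def[symmetric] by blast
      show ?thesis unfolding Jm_def J_milp_def by (rule cInf_greatest[OF ne]) (use key in blast)
    qed
    define I where "I = {i. i < N \<and> zinf i \<notin> X i}"
    have IN: "I \<subseteq> {..<N}" unfolding I_def by auto
    define pz where "pz i = dotp (n i) (c i) (zinf i)" for i
    have sumpz: "(\<Sum>i<N. pz i) = Jr" unfolding pz_def using sumzinf Jr_le by simp
    have split: "(\<Sum>i<N. g i) = (\<Sum>i\<in>I. g i) + (\<Sum>i\<in>{..<N} - I. g i)" for g :: "nat \<Rightarrow> real"
      using IN by (metis finite_lessThan sum.subset_diff add.commute)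
    have xsum: "(\<Sum>i\<in>{..<N} - I. dotp (n i) (c i) (xinf i)) \<le> (\<Sum>i\<in>{..<N} - I. pz i)"
      unfolding pz_def using xle unfolding I_def by (intro sum_mono) auto
    have rhs1: "(\<Sum>i\<in>I. dotp (n i) (c i) (xinf i) - pval (n i) (c i) (A i) S (X i) (yinf i))
              = (\<Sum>i\<in>I. dotp (n i) (c i) (xinf i)) - (\<Sum>i\<in>I. pz i)"
      using pv IN unfolding pz_def by (auto simp: sum_subtractf intro!: sum.cong)
    have rhs2: "(\<Sum>i<N. dotp (n i) (c i) (zh i) - pval (n i) (c i) (A i) S (X i) (yinf i))
              = (\<Sum>i<N. dotp (n i) (c i) (zh i)) - Jr"
    proof -
      have "(\<Sum>i<N. dotp (n i) (c i) (zh i) - pval (n i) (c i) (A i) S (X i) (yinf i))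
           = (\<Sum>i<N. dotp (n i) (c i) (zh i) - pz i)" using pv unfolding pz_def by (intro sum.cong) auto
      then show ?thesis using sumpz by (simp add: sum_subtractf)
    qed
    have A1: "(\<Sum>i<N. dotp (n i) (c i) (xinf i)) \<le> (\<Sum>i\<in>I. dotp (n i) (c i) (xinf i)) + Jr - (\<Sum>i\<in>I. pz i)"
      using split[of "\<lambda>i. dotp (n i) (c i) (xinf i)"] split[of pz] xsum sumpz by linarith
    have A2: "q * ((\<Sum>i<N. dotp (n i) (c i) (zh i)) - Jr) = q * (\<Sum>i<N. dotp (n i) (c i) (zh i)) - q * Jr"
      by (simp add: algebra_simps)
    have A3: "(1 + q) * Jr = Jr + q * Jr" by (simp add: algebra_simps)
    show "(\<Sum>i<N. dotp (n i) (c i) (xinf i)) - J_milp N S n c A b X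
           \<le> (\<Sum>i\<in>{i. i < N \<and> zinf i \<notin> X i}.
                 dotp (n i) (c i) (xinf i) - pval (n i) (c i) (A i) S (X i) (yinf i))
             + \<sigma> / zeta N S n A b r zh *
               (\<Sum>i<N. dotp (n i) (c i) (zh i) - pval (n i) (c i) (A i) S (X i) (yinf i))"
      unfolding I_def[symmetric] Jm_def[symmetric] \<zeta>_def[symmetric] q_def[symmetric] rhs1 rhs2
      using A1 A2 A3 Jmilp by linarith
  qed
qed

end
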